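(* Let $\beta\in(-\infty,0)\cup(0,1)$, $G_\beta(u)=\frac{\beta}{|\beta|}u^\beta$, $u_0\in\ell^\infty_+(\mathbb{Z})$ with $\frac12\le u_0\le1$, and let $\Psi_*$ be a creation operator whose jump sequence satisfies $d\le L$. Then there exists a classical solution $u$ of $\partial_t u=\Delta G_\beta(u)$ in $(0,\infty)\times\mathbb{Z}$ with $u(0)=\Psi_*u_0$. Furthermore $u\le1$ and $$u(t,k)\ge c\,\big(1\wedge t^{\frac1{1-\beta}}\big)\quad\text{for all }t\ge0,\ k\in\mathbb{Z},$$ where $c>0$ depends only on $\beta$ and $L$.
   Context: $\Delta v(k)=v(k-1)-2v(k)+v(k+1)$. Creation operator: for strictly increasing $\Psi:\mathbb{Z}\to\mathbb{Z}$, $\Psi_*x(\Psi(k))=x(k)$ and $\Psi_*x(l)=0$ off $\Psi(\mathbb{Z})$; jump sequence $d$ = gaps $\Psi(k+1)-\Psi(k)-1$. A classical solution: $u\in C^0([0,\infty);\ell^\infty_+(\mathbb{Z}))$, $u(0)=\Psi_*u_0$, and for each $k$, $u(\cdot,k)\in C^1((0,\infty))$ with positive values satisfying the equation pointwise. *)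

theory Defs
  imports "HOL-Analysis.Analysis"
begin

definition dlap :: "(int \<Rightarrow> real) \<Rightarrow> int \<Rightarrow> real" where
  "dlap v k = v (k - 1) - 2 * v k + v (k + 1)"

definition Gb :: "real \<Rightarrow> real \<Rightarrow> real" where
  "Gb \<beta> x = (\<beta> / \<bar>\<beta>\<bar>) * x powr \<beta>"

definition linf_plus :: "(int \<Rightarrow> real) \<Rightarrow> bool" where
  "linf_plus v \<longleftrightarrow> (\<exists>B. \<forall>k. \<bar>v k\<bar> \<le> B) \<and> (\<forall>k. 0 \<le> v k)"

definition creation :: "(int \<Rightarrow> int) \<Rightarrow> (int \<Rightarrow> real) \<Rightarrow> int \<Rightarrow> real" where
  "creation \<Psi> x l = (if l \<in> range \<Psi> then x (inv \<Psi> l) else 0)"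

definition jumps :: "(int \<Rightarrow> int) \<Rightarrow> int \<Rightarrow> int" where
  "jumps \<Psi> k = \<Psi> (k + 1) - \<Psi> k - 1"

definition cont_linf_plus :: "(real \<Rightarrow> int \<Rightarrow> real) \<Rightarrow> bool" where
  "cont_linf_plus u \<longleftrightarrow>
     (\<forall>t\<ge>0. linf_plus (u t)) \<and>
     (\<forall>t\<ge>0. \<forall>\<epsilon>>0. \<exists>\<delta>>0. \<forall>s\<ge>0. \<bar>s - t\<bar> < \<delta> \<longrightarrow> (\<forall>k. \<bar>u s k - u t k\<bar> \<le> \<epsilon>))"

definition classical_solution :: "real \<Rightarrow> (int \<Rightarrow> real) \<Rightarrow> (real \<Rightarrow> int \<Rightarrow> real) \<Rightarrow> bool" where
  "classical_solution \<beta> w u \<longleftrightarrow>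
     cont_linf_plus u \<and> u 0 = w \<and>
     (\<forall>k. (\<forall>t>0. 0 < u t k) \<and>
          (\<exists>u'. continuous_on {0<..} u' \<and>
                (\<forall>t>0. ((\<lambda>s. u s k) has_real_derivative u' t) (at t))) \<and>
          (\<forall>t>0. ((\<lambda>s. u s k) has_real_derivative dlap (\<lambda>j. Gb \<beta> (u t j)) k) (at t)))"

end

theory Submission
  imports Defs
begin

lemma deriv_le_imp_diff_le:
  fixes f g :: "real \<Rightarrow> real"
  assumes "a \<le> b" "continuous_on {a..b} f" "continuous_on {a..b} g"
    and "\<And>x. a < x \<Longrightarrow> x < b \<Longrightarrow> \<exists>df dg. (f has_real_derivative df) (at x) \<and> (g has_real_derivative dg) (at x) \<and> df \<le> dg"
  shows "f b - f a \<le> g b - g a"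
proof -
  have "(\<lambda>x. g x - f x) a \<le> (\<lambda>x. g x - f x) b"
  proof (rule DERIV_nonneg_imp_increasing_open[OF assms(1)])
    fix x assume "a < x" "x < b"
    then obtain df dg where "(f has_real_derivative df) (at x)" "(g has_real_derivative dg) (at x)" "df \<le> dg"
      using assms(4) by blast
    then show "\<exists>y. ((\<lambda>x. g x - f x) has_real_derivative y) (at x) \<and> 0 \<le> y"
      by (intro exI[of _ "dg - df"]) (auto intro!: derivative_eq_intros)
  next
    show "continuous_on {a..b} (\<lambda>x. g x - f x)"
      using assms(2,3) by (intro continuous_intros)
  qed
  then show ?thesis by simp
qed

lemma sgn_beta: "(\<beta>::real) \<noteq> 0 \<Longrightarrow> \<beta> / \<bar>\<beta>\<bar> * \<beta> = \<bar>\<beta>\<bar>"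
  by (cases "\<beta> > 0") (auto simp: field_simps)

lemma Gb_deriv:
  assumes "\<beta> \<noteq> 0" "0 < x"
  shows "(Gb \<beta> has_real_derivative \<bar>\<beta>\<bar> * x powr (\<beta> - 1)) (at x)"
proof -
  have "((\<lambda>x. \<beta> / \<bar>\<beta>\<bar> * x powr \<beta>) has_real_derivative \<beta> / \<bar>\<beta>\<bar> * (\<beta> * x powr (\<beta> - 1))) (at x)"
    using assms by (intro DERIV_cmult has_real_derivative_powr) auto
  moreover have "\<beta> / \<bar>\<beta>\<bar> * (\<beta> * x powr (\<beta> - 1)) = \<bar>\<beta>\<bar> * x powr (\<beta> - 1)"
    using sgn_beta[OF assms(1)] by (metis mult.assoc)
  ultimately show ?thesis unfolding Gb_def[abs_def] by simp
qed

lemma Gb_cont: "\<beta> \<noteq> 0 \<Longrightarrow> continuous_on {0<..} (Gb \<beta>)"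
  unfolding Gb_def[abs_def] by (intro continuous_intros) auto

lemma Gb_mono:
  assumes "\<beta> \<noteq> 0" "0 < x" "x \<le> y"
  shows "Gb \<beta> x \<le> Gb \<beta> y"
proof -
  have "Gb \<beta> x - Gb \<beta> x \<le> Gb \<beta> y - Gb \<beta> x" 
  proof -
    have "(\<lambda>_. 0::real) y - (\<lambda>_. 0::real) x \<le> Gb \<beta> y - Gb \<beta> x"
    proof (rule deriv_le_imp_diff_le[OF assms(3)])
      show "continuous_on {x..y} (Gb \<beta>)"
        using Gb_cont[OF assms(1)] by (rule continuous_on_subset) (use assms in auto)
      fix z assume "x < z" "z < y"
      then show "\<exists>df dg. ((\<lambda>_. 0) has_real_derivative df) (at z) \<and> (Gb \<beta> has_real_derivative dg) (at z) \<and> df \<le> dg"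
        using assms by (intro exI[of _ 0] exI[of _ "\<bar>\<beta>\<bar> * z powr (\<beta> - 1)"]) (auto intro!: Gb_deriv)
    qed auto
    then show ?thesis by simp
  qed
  then show ?thesis by simp
qed

lemma Gb_lip_aux:
  assumes "\<beta> \<noteq> 0" "\<beta> < 1" "0 < \<eta>" "\<eta> \<le> x" "x \<le> y"
  shows "Gb \<beta> y - Gb \<beta> x \<le> \<bar>\<beta>\<bar> * \<eta> powr (\<beta> - 1) * (y - x)"
proof -
  let ?K = "\<bar>\<beta>\<bar> * \<eta> powr (\<beta> - 1)"
  have "Gb \<beta> y - Gb \<beta> x \<le> (\<lambda>z. ?K * z) y - (\<lambda>z. ?K * z) x"
  proof (rule deriv_le_imp_diff_le[OF assms(5)])
    show "continuous_on {x..y} (Gb \<beta>)"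
      using Gb_cont[OF assms(1)] by (rule continuous_on_subset) (use assms in auto)
    show "continuous_on {x..y} (\<lambda>z. ?K * z)" by (intro continuous_intros)
    fix z assume z: "x < z" "z < y"
    have "z powr (\<beta> - 1) \<le> \<eta> powr (\<beta> - 1)"
      using assms z by (intro powr_mono2') auto
    then have "\<bar>\<beta>\<bar> * z powr (\<beta> - 1) \<le> ?K" by (simp add: mult_left_mono)
    then show "\<exists>df dg. (Gb \<beta> has_real_derivative df) (at z) \<and> ((\<lambda>z. ?K * z) has_real_derivative dg) (at z) \<and> df \<le> dg"
      using assms z by (intro exI[of _ "\<bar>\<beta>\<bar> * z powr (\<beta> - 1)"] exI[of _ ?K])
        (auto intro!: Gb_deriv derivative_eq_intros)
  qed
  then show ?thesis by (simp add: algebra_simps)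
qed

lemma Gb_lip:
  assumes "\<beta> \<noteq> 0" "\<beta> < 1" "0 < \<eta>" "\<eta> \<le> x" "\<eta> \<le> y"
  shows "\<bar>Gb \<beta> y - Gb \<beta> x\<bar> \<le> \<bar>\<beta>\<bar> * \<eta> powr (\<beta> - 1) * \<bar>y - x\<bar>"
proof (cases "x \<le> y")
  case True
  have "Gb \<beta> x \<le> Gb \<beta> y" using Gb_mono[OF assms(1) _ True] assms by linarith
  moreover have "Gb \<beta> y - Gb \<beta> x \<le> \<bar>\<beta>\<bar> * \<eta> powr (\<beta> - 1) * (y - x)" using Gb_lip_aux[OF assms(1-4) True] .
  moreover have "\<bar>y - x\<bar> = y - x" using True by linarith
  ultimately show ?thesis by (metis abs_of_nonneg diff_ge_0_iff_ge)
next
  case False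
  then have yx: "y \<le> x" by simp
  have "Gb \<beta> y \<le> Gb \<beta> x" using Gb_mono[OF assms(1) _ yx] assms by linarith
  moreover have "Gb \<beta> x - Gb \<beta> y \<le> \<bar>\<beta>\<bar> * \<eta> powr (\<beta> - 1) * (x - y)" using Gb_lip_aux[OF assms(1-3,5) yx] .
  moreover have "\<bar>y - x\<bar> = x - y" using yx by linarith
  moreover have "\<bar>Gb \<beta> y - Gb \<beta> x\<bar> = Gb \<beta> x - Gb \<beta> y" using calculation(1) by linarith
  ultimately show ?thesis by metis
qed



lemma pw_bounds:
  assumes "\<beta> \<noteq> 0" "\<beta> < 1" "0 < \<eta>" "\<eta> \<le> a" "\<eta> \<le> b"
  defines "K \<equiv> \<bar>\<beta>\<bar> * \<eta> powr (\<beta> - 1)"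
  shows "Gb \<beta> a - Gb \<beta> b \<le> K * max 0 (a - b)"
    and "2 * K * (a - b) - 2 * (Gb \<beta> a - Gb \<beta> b) \<le> 2 * K * max 0 (a - b)"
proof -
  have K0: "0 \<le> K" unfolding K_def by simp
  show "Gb \<beta> a - Gb \<beta> b \<le> K * max 0 (a - b)"
  proof (cases "a \<le> b")
    case True
    then have "Gb \<beta> a \<le> Gb \<beta> b" using Gb_mono[OF assms(1)] assms by auto
    moreover have "0 \<le> K * max 0 (a - b)" using K0 by simp
    ultimately show ?thesis by linarith
  next
    case False
    then show ?thesis using Gb_lip_aux[OF assms(1-3,5), of a] K0 unfolding K_def by (simp add: max_def)
  qed
  show "2 * K * (a - b) - 2 * (Gb \<beta> a - Gb \<beta> b) \<le> 2 * K * max 0 (a - b)"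
  proof (cases "b \<le> a")
    case True
    then have "Gb \<beta> b \<le> Gb \<beta> a" using Gb_mono[OF assms(1)] assms by auto
    then show ?thesis using True by (simp add: max_def)
  next
    case False
    then have "Gb \<beta> b - Gb \<beta> a \<le> K * (b - a)" using Gb_lip_aux[OF assms(1-4), of b] unfolding K_def by simp
    then show ?thesis using False K0 by (simp add: max_def algebra_simps)
  qed
qed

lemma B_deriv:
  "((\<lambda>s. (C * s) ^ Suc n / fact (Suc n)) has_real_derivative C * ((C * x) ^ n / fact n)) (at x)"
proof -
  have "((\<lambda>s. (C * s) ^ Suc n / fact (Suc n)) has_real_derivative
        (real (Suc n) * (C * x) ^ n * C) / fact (Suc n)) (at x)"
    by (auto intro!: derivative_eq_intros simp del: fact_Suc power_Suc)
  moreover have "(real (Suc n) * (C * x) ^ n * C) / fact (Suc n) = C * ((C * x) ^ n / fact n)"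
    by (simp add: fact_Suc field_simps del: of_nat_Suc)
  ultimately show ?thesis by (rule DERIV_cong)
qed

lemma pow_fact_tendsto: "(\<lambda>n. (x::real) ^ n / fact n) \<longlonglongrightarrow> 0"
proof -
  have "summable (\<lambda>n. inverse (fact n) * x ^ n)" by (rule summable_exp)
  then have "(\<lambda>n. inverse (fact n) * x ^ n) \<longlonglongrightarrow> 0" by (rule summable_LIMSEQ_zero)
  then show ?thesis by (simp add: field_simps)
qed

lemma comparison:
  fixes u v :: "real \<Rightarrow> int \<Rightarrow> real"
  assumes \<beta>: "\<beta> \<noteq> 0" "\<beta> < 1" and \<eta>: "0 < \<eta>"
    and cu: "\<And>k. continuous_on {0..T} (\<lambda>t. u t k)"
    and cv: "\<And>k. continuous_on {0..T} (\<lambda>t. v t k)"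
    and du: "\<And>k t. 0 < t \<Longrightarrow> t < T \<Longrightarrow> \<exists>d. ((\<lambda>s. u s k) has_real_derivative d) (at t) \<and> dlap (\<lambda>j. Gb \<beta> (u t j)) k \<le> d"
    and dv: "\<And>k t. 0 < t \<Longrightarrow> t < T \<Longrightarrow> \<exists>d. ((\<lambda>s. v s k) has_real_derivative d) (at t) \<and> d \<le> dlap (\<lambda>j. Gb \<beta> (v t j)) k"
    and bu: "\<And>k t. 0 \<le> t \<Longrightarrow> t \<le> T \<Longrightarrow> \<eta> \<le> u t k \<and> u t k \<le> 1"
    and bv: "\<And>k t. 0 \<le> t \<Longrightarrow> t \<le> T \<Longrightarrow> \<eta> \<le> v t k \<and> v t k \<le> 1"
    and init: "\<And>k. v 0 k \<le> u 0 k"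
    and t: "0 \<le> t" "t \<le> T"
  shows "v t k \<le> u t k"
proof -
  define K where "K = \<bar>\<beta>\<bar> * \<eta> powr (\<beta> - 1)"
  define C where "C = 4 * K"
  define \<Lambda> where "\<Lambda> = 2 * K"
  have K0: "0 \<le> K" unfolding K_def by simp
  define B where "B = (\<lambda>n s. (C * s) ^ n / fact n :: real)"
  have B0: "0 \<le> B n s" if "0 \<le> s" for n s
    using that K0 unfolding B_def C_def by simp
  have main: "\<forall>k t. 0 \<le> t \<longrightarrow> t \<le> T \<longrightarrow> v t k - u t k \<le> B n t" for n
  proof (induction n)
    case 0
    show ?case using bu bv \<eta> unfolding B_def by (auto simp: algebra_simps) (smt (verit))
  next
    case (Suc n)
    show ?case
    proof (intro allI impI)
      fix k t assume t: "0 \<le> t" "t \<le> T"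
      define H where "H = (\<lambda>s. exp (\<Lambda> * s) * (v s k - u s k - B (Suc n) s))"
      have "H t - H 0 \<le> (\<lambda>_. 0::real) t - (\<lambda>_. 0::real) 0"
      proof (rule deriv_le_imp_diff_le[OF t(1)])
        have "continuous_on {0..t} (\<lambda>s. u s k)" using cu[of k] by (rule continuous_on_subset) (use t in auto)
        moreover have "continuous_on {0..t} (\<lambda>s. v s k)" using cv[of k] by (rule continuous_on_subset) (use t in auto)
        ultimately show "continuous_on {0..t} H" unfolding H_def B_def by (intro continuous_intros) auto
        show "continuous_on {0..t} (\<lambda>_. 0::real)" by simp
        fix x assume x: "0 < x" "x < t"
        obtain dU where dU: "((\<lambda>s. u s k) has_real_derivative dU) (at x)" "dlap (\<lambda>j. Gb \<beta> (u x j)) k \<le> dU"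
          using du[of x k] x t by auto
        obtain dV where dV: "((\<lambda>s. v s k) has_real_derivative dV) (at x)" "dV \<le> dlap (\<lambda>j. Gb \<beta> (v x j)) k"
          using dv[of x k] x t by auto
        have xT: "0 \<le> x" "x \<le> T" using x t by auto
        have ih: "max 0 (v x j - u x j) \<le> B n x" for j
          using Suc.IH xT B0[of x n] by auto
        have bj: "\<eta> \<le> u x j" "\<eta> \<le> v x j" for j using bu[OF xT] bv[OF xT] by auto
        have p1: "Gb \<beta> (v x j) - Gb \<beta> (u x j) \<le> K * max 0 (v x j - u x j)" for j
          using pw_bounds(1)[OF \<beta> \<eta> bj(2)[of j] bj(1)[of j]] unfolding K_def .
        have p2: "2*K*(v x j - u x j) - 2*(Gb \<beta> (v x j) - Gb \<beta> (u x j)) \<le> 2*K * max 0 (v x j - u x j)" for j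
          using pw_bounds(2)[OF \<beta> \<eta> bj(2)[of j] bj(1)[of j]] unfolding K_def .
        have "\<Lambda> * (v x k - u x k) + (dlap (\<lambda>j. Gb \<beta> (v x j)) k - dlap (\<lambda>j. Gb \<beta> (u x j)) k)
              = (Gb \<beta> (v x (k-1)) - Gb \<beta> (u x (k-1))) + (2*K*(v x k - u x k) - 2*(Gb \<beta> (v x k) - Gb \<beta> (u x k)))
                + (Gb \<beta> (v x (k+1)) - Gb \<beta> (u x (k+1)))"
          unfolding dlap_def \<Lambda>_def by (simp add: algebra_simps)
        also have "\<dots> \<le> K * max 0 (v x (k-1) - u x (k-1)) + 2*K * max 0 (v x k - u x k) + K * max 0 (v x (k+1) - u x (k+1))"
          using p1[of "k-1"] p2[of k] p1[of "k+1"] by linarith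
        also have "\<dots> \<le> K * B n x + 2*K * B n x + K * B n x"
          using ih[of "k-1"] ih[of k] ih[of "k+1"] K0
          by (intro add_mono mult_left_mono) auto
        finally have key: "\<Lambda> * (v x k - u x k) + (dV - dU) \<le> C * B n x"
          using dU(2) dV(2) unfolding C_def by linarith
        have dB: "((\<lambda>s. B (Suc n) s) has_real_derivative C * B n x) (at x)"
          unfolding B_def by (rule B_deriv)
        have dH: "(H has_real_derivative exp (\<Lambda> * x) * \<Lambda> * (v x k - u x k - B (Suc n) x) + exp (\<Lambda> * x) * (dV - dU - C * B n x)) (at x)"
          unfolding H_def using dU(1) dV(1) dB
          by (auto intro!: derivative_eq_intros simp: algebra_simps)
        have "exp (\<Lambda> * x) * \<Lambda> * (v x k - u x k - B (Suc n) x) + exp (\<Lambda> * x) * (dV - dU - C * B n x)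
              = exp (\<Lambda> * x) * ((\<Lambda> * (v x k - u x k) + (dV - dU) - C * B n x) - \<Lambda> * B (Suc n) x)"
          by (simp add: algebra_simps)
        also have "\<dots> \<le> 0"
        proof -
          have "0 \<le> \<Lambda> * B (Suc n) x" using B0[of x "Suc n"] xT K0 unfolding \<Lambda>_def by simp
          then have "(\<Lambda> * (v x k - u x k) + (dV - dU) - C * B n x) - \<Lambda> * B (Suc n) x \<le> 0" using key by linarith
          then show ?thesis by (simp add: mult_nonneg_nonpos)
        qed
        finally show "\<exists>df dg. (H has_real_derivative df) (at x) \<and> ((\<lambda>_. 0) has_real_derivative dg) (at x) \<and> df \<le> dg"
          using dH by (intro exI[of _ _] exI[of _ 0]) (auto intro: derivative_intros)
      qed
      then have "H t \<le> H 0" by simp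
      also have "H 0 \<le> 0" unfolding H_def B_def using init[of k] by simp
      finally have "exp (\<Lambda> * t) * (v t k - u t k - B (Suc n) t) \<le> 0" unfolding H_def .
      then show "v t k - u t k \<le> B (Suc n) t" by (simp add: mult_le_0_iff)
    qed
  qed
  have "(\<lambda>n. B n t) \<longlonglongrightarrow> 0" unfolding B_def by (rule pow_fact_tendsto)
  then have "v t k - u t k \<le> 0"
    by (rule LIMSEQ_le_const) (use main t in auto)
  then show ?thesis by simp
qed



lemma at_within_Ici_eq: "0 \<le> (x::real) \<Longrightarrow> at x within {0..} = at x within {0..x+1}"
  by (rule at_within_nhd[of _ "{..<x+1}"]) auto

lemma prim_props:
  fixes f :: "real \<Rightarrow> real"
  assumes "continuous_on {0..} f"
  shows "\<And>t. 0 < t \<Longrightarrow> ((\<lambda>t. integral {0..t} f) has_real_derivative f t) (at t)"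
    and "continuous_on {0..} (\<lambda>t. integral {0..t} f)"
    and "integral {0..0} f = 0"
proof -
  have w: "((\<lambda>t. integral {0..t} f) has_real_derivative f t) (at t within {0..t+1})" if "0 \<le> t" for t
  proof (rule integral_has_real_derivative)
    show "continuous_on {0..t + 1} f" using assms by (rule continuous_on_subset) auto
  qed (use that in auto)
  show "((\<lambda>t. integral {0..t} f) has_real_derivative f t) (at t)" if "0 < t" for t
  proof -
    have "t \<in> interior {0..t+1}" using that by simp
    then have e: "at t within {0..t+1} = at t" by (rule at_within_interior)
    have "((\<lambda>t. integral {0..t} f) has_real_derivative f t) (at t within {0..t+1})" using w[of t] that by linarith
    then show ?thesis unfolding e .
  qed
  show "continuous_on {0..} (\<lambda>t. integral {0..t} f)"
    unfolding continuous_on_eq_continuous_within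
  proof
    fix x :: real assume "x \<in> {0..}"
    then have x: "0 \<le> x" by simp
    have "continuous (at x within {0..x+1}) (\<lambda>t. integral {0..t} f)"
      using w[OF x] by (rule DERIV_continuous)
    then show "continuous (at x within {0..}) (\<lambda>t. integral {0..t} f)"
      using at_within_Ici_eq[OF x] by (simp add: continuous_within)
  qed
  show "integral {0..0} f = 0" by simp
qed

lemma deriv_abs_bound:
  fixes h :: "real \<Rightarrow> real"
  assumes "a \<le> b" "continuous_on {a..b} h"
    and "\<And>y. a < y \<Longrightarrow> y < b \<Longrightarrow> \<exists>d. (h has_real_derivative d) (at y) \<and> \<bar>d\<bar> \<le> B"
  shows "\<bar>h b - h a\<bar> \<le> B * (b - a)"
proof -
  have c: "continuous_on {a..b} (\<lambda>y. B * y)" by (intro continuous_intros)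
  have "h b - h a \<le> (\<lambda>y. B * y) b - (\<lambda>y. B * y) a"
  proof (rule deriv_le_imp_diff_le[OF assms(1,2) c])
    fix y assume "a < y" "y < b"
    then obtain d where "(h has_real_derivative d) (at y)" "\<bar>d\<bar> \<le> B" using assms(3) by blast
    then show "\<exists>df dg. (h has_real_derivative df) (at y) \<and> ((\<lambda>y. B * y) has_real_derivative dg) (at y) \<and> df \<le> dg"
      by (intro exI[of _ d] exI[of _ B]) (auto intro!: derivative_eq_intros)
  qed
  moreover have "(\<lambda>y. - B * y) b - (\<lambda>y. - B * y) a \<le> h b - h a"
  proof (rule deriv_le_imp_diff_le[OF assms(1) _ assms(2)])
    show "continuous_on {a..b} (\<lambda>y. - B * y)" by (intro continuous_intros)
    fix y assume "a < y" "y < b"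
    then obtain d where "(h has_real_derivative d) (at y)" "\<bar>d\<bar> \<le> B" using assms(3) by blast
    then show "\<exists>df dg. ((\<lambda>y. - B * y) has_real_derivative df) (at y) \<and> (h has_real_derivative dg) (at y) \<and> df \<le> dg"
      by (intro exI[of _ "-B"] exI[of _ d]) (auto intro!: derivative_eq_intros)
  qed
  ultimately show ?thesis by (simp add: algebra_simps abs_le_iff)
qed

lemma quad_bound:
  fixes f D :: "real \<Rightarrow> real"
  assumes r: "0 < r"
    and df: "\<And>x. \<bar>x - t\<bar> < r \<Longrightarrow> (f has_real_derivative D x) (at x)"
    and dl: "\<And>x. \<bar>x - t\<bar> < r \<Longrightarrow> \<bar>D x - D t\<bar> \<le> M * \<bar>x - t\<bar>"
    and x: "\<bar>x - t\<bar> < r"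
  shows "\<bar>f x - f t - D t * (x - t)\<bar> \<le> M * (x - t)^2"
proof -
  define h where "h = (\<lambda>y. f y - D t * y)"
  have hd: "(h has_real_derivative D y - D t) (at y)" if "\<bar>y - t\<bar> < r" for y
    unfolding h_def using df[OF that] by (auto intro!: derivative_eq_intros)
  have betw: "\<bar>y - t\<bar> \<le> \<bar>x - t\<bar>" if "min x t \<le> y" "y \<le> max x t" for y
    using that by (cases "x \<le> t") (simp_all add: min_def max_def abs_if)
  have main: "\<bar>h b - h a\<bar> \<le> M * \<bar>x - t\<bar> * (b - a)" if ab: "a \<le> b" "a = min x t" "b = max x t" for a b
  proof (rule deriv_abs_bound[OF ab(1)])
    have "(h has_real_derivative D y - D t) (at y within {a..b})" if "y \<in> {a..b}" for y
    proof -
      have "\<bar>y - t\<bar> < r" using betw[of y] that ab x by simp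
      from hd[OF this] show ?thesis by (rule has_field_derivative_at_within)
    qed
    then show "continuous_on {a..b} h" by (rule DERIV_continuous_on)
    fix y assume y: "a < y" "y < b"
    have yx: "\<bar>y - t\<bar> \<le> \<bar>x - t\<bar>" using betw[of y] y ab by simp
    have yr: "\<bar>y - t\<bar> < r" using yx x by simp
    have ne: "y \<noteq> t" using y ab by (cases "x \<le> t") (simp_all add: min_def max_def)
    have "0 \<le> M * \<bar>y - t\<bar>" using dl[OF yr] abs_ge_zero order_trans by blast
    then have M0: "0 \<le> M" using ne by (simp add: zero_le_mult_iff)
    have "\<bar>D y - D t\<bar> \<le> M * \<bar>y - t\<bar>" using dl[OF yr] .
    also have "\<dots> \<le> M * \<bar>x - t\<bar>" using yx M0 by (rule mult_left_mono)
    finally show "\<exists>d. (h has_real_derivative d) (at y) \<and> \<bar>d\<bar> \<le> M * \<bar>x - t\<bar>"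
      using hd[OF yr] by blast
  qed
  show ?thesis
  proof (cases "t \<le> x")
    case True
    have "\<bar>h x - h t\<bar> \<le> M * \<bar>x - t\<bar> * (x - t)" using main[of t x] True by auto
    then show ?thesis using True unfolding h_def by (simp add: power2_eq_square algebra_simps)
  next
    case False
    have "\<bar>h t - h x\<bar> \<le> M * \<bar>x - t\<bar> * (t - x)" using main[of x t] False by auto
    then show ?thesis using False unfolding h_def by (simp add: power2_eq_square algebra_simps abs_minus_commute)
  qed
qed

lemma deriv_limit:
  fixes f D :: "nat \<Rightarrow> real \<Rightarrow> real"
  assumes r: "0 < r"
    and df: "\<And>n x. \<bar>x - t\<bar> < r \<Longrightarrow> (f n has_real_derivative D n x) (at x)"
    and dl: "\<And>n x. \<bar>x - t\<bar> < r \<Longrightarrow> \<bar>D n x - D n t\<bar> \<le> M * \<bar>x - t\<bar>"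
    and fl: "\<And>x. \<bar>x - t\<bar> < r \<Longrightarrow> (\<lambda>n. f n x) \<longlonglongrightarrow> g x"
    and Dl: "(\<lambda>n. D n t) \<longlonglongrightarrow> d"
  shows "(g has_real_derivative d) (at t)"
proof -
  have M0: "0 \<le> M"
  proof -
    have "\<bar>(t + r/2) - t\<bar> < r" using r by simp
    then have "0 \<le> M * \<bar>(t + r/2) - t\<bar>" using dl[of "t + r/2" 0] abs_ge_zero order_trans by blast
    moreover have "\<bar>(t + r/2) - t\<bar> > 0" using r by simp
    ultimately show ?thesis by (simp add: zero_le_mult_iff)
  qed
  have gb: "\<bar>g x - g t - d * (x - t)\<bar> \<le> M * (x - t)^2" if x: "\<bar>x - t\<bar> < r" for x
  proof -
    have "(\<lambda>n. \<bar>f n x - f n t - D n t * (x - t)\<bar>) \<longlonglongrightarrow> \<bar>g x - g t - d * (x - t)\<bar>"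
      using fl[OF x] fl[of t] Dl r by (intro tendsto_intros) auto
    moreover have "\<bar>f n x - f n t - D n t * (x - t)\<bar> \<le> M * (x - t)^2" for n
      by (rule quad_bound[OF r df dl x])
    ultimately show ?thesis by (intro LIMSEQ_le_const2) auto
  qed
  show ?thesis
    unfolding has_field_derivative_iff LIM_eq
  proof (intro allI impI)
    fix e :: real assume e: "0 < e"
    define s where "s = min r (e / (M + 1))"
    have s: "0 < s" using r e M0 unfolding s_def by auto
    show "\<exists>s>0. \<forall>x. x \<noteq> t \<and> norm (x - t) < s \<longrightarrow> norm ((g x - g t) / (x - t) - d) < e"
    proof (intro exI[of _ s] conjI allI impI s)
      fix x assume x: "x \<noteq> t \<and> norm (x - t) < s"
      then have xr: "\<bar>x - t\<bar> < r" unfolding s_def by auto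
      have nz: "\<bar>x - t\<bar> > 0" using x by auto
      have "(g x - g t) / (x - t) - d = (g x - g t - d * (x - t)) / (x - t)"
        using x by (simp add: field_simps)
      then have "\<bar>(g x - g t) / (x - t) - d\<bar> = \<bar>g x - g t - d * (x - t)\<bar> / \<bar>x - t\<bar>"
        by (simp add: abs_divide)
      also have "\<dots> \<le> M * (x - t)^2 / \<bar>x - t\<bar>"
        using gb[OF xr] nz by (intro divide_right_mono) auto
      also have "\<dots> = M * \<bar>x - t\<bar>"
      proof -
        have sq: "(x - t)^2 = \<bar>x - t\<bar> * \<bar>x - t\<bar>" by (metis abs_mult_self_eq power2_eq_square)
        show ?thesis unfolding sq using nz by (metis less_irrefl mult.assoc nonzero_mult_div_cancel_right)
      qed
      also have "\<dots> < e"
      proof -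
        have "\<bar>x - t\<bar> < e / (M + 1)" using x unfolding s_def by auto
        then have "(M + 1) * \<bar>x - t\<bar> < e" using M0 by (simp add: field_simps)
        moreover have "M * \<bar>x - t\<bar> \<le> (M + 1) * \<bar>x - t\<bar>" by (simp add: distrib_right)
        ultimately show ?thesis by linarith
      qed
      finally show "norm ((g x - g t) / (x - t) - d) < e" by simp
    qed
  qed
qed



lemma Gb_comp_cont:
  assumes "\<beta> \<noteq> 0" "continuous_on S f" "\<And>s. s \<in> S \<Longrightarrow> 0 < f s"
  shows "continuous_on S (\<lambda>s. Gb \<beta> (f s))"
  unfolding Gb_def using assms by (intro continuous_intros) force+

lemma existence:
  fixes w :: "int \<Rightarrow> real"
  assumes \<beta>: "\<beta> \<noteq> 0" "\<beta> < 1" and \<delta>: "0 < \<delta>" "\<delta> \<le> 1"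
    and wb: "\<And>k. \<delta> \<le> w k \<and> w k \<le> 1"
  shows "\<exists>u. (\<forall>k. u 0 k = w k) \<and> (\<forall>k t. 0 \<le> t \<longrightarrow> \<delta> \<le> u t k \<and> u t k \<le> 1)
           \<and> (\<forall>k. continuous_on {0..} (\<lambda>t. u t k))
           \<and> (\<forall>k t. 0 < t \<longrightarrow> ((\<lambda>s. u s k) has_real_derivative dlap (\<lambda>j. Gb \<beta> (u t j)) k) (at t))"
proof -
  define K where "K = \<bar>\<beta>\<bar> * \<delta> powr (\<beta> - 1)"
  define \<Lambda> where "\<Lambda> = 2 * K + 1"
  have K0: "0 \<le> K" unfolding K_def by simp
  have L1: "1 \<le> \<Lambda>" unfolding \<Lambda>_def using K0 by simp
  define N where "N = (\<lambda>(x::int\<Rightarrow>real) k. Gb \<beta> (x (k-1)) + \<Lambda> * x k - 2 * Gb \<beta> (x k) + Gb \<beta> (x (k+1)))"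
  have N_mono: "N x k \<le> N y k" if "\<And>j. \<delta> \<le> x j \<and> x j \<le> y j" for x y k
  proof -
    have a: "Gb \<beta> (x j) \<le> Gb \<beta> (y j)" for j using Gb_mono[OF \<beta>(1), of "x j" "y j"] that[of j] \<delta> by auto
    have "Gb \<beta> (y k) - Gb \<beta> (x k) \<le> K * (y k - x k)"
      using Gb_lip_aux[OF \<beta> \<delta>(1), of "x k" "y k"] that[of k] unfolding K_def by auto
    then have "\<Lambda> * x k - 2 * Gb \<beta> (x k) \<le> \<Lambda> * y k - 2 * Gb \<beta> (y k)"
      using that[of k] unfolding \<Lambda>_def by (simp add: algebra_simps)
    then show ?thesis unfolding N_def using a[of "k-1"] a[of "k+1"] by linarith
  qed
  have N_const: "N (\<lambda>_. c) k = \<Lambda> * c" for c k unfolding N_def by simp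
  have N_bnd: "\<Lambda> * \<delta> \<le> N x k \<and> N x k \<le> \<Lambda>" if "\<And>j. \<delta> \<le> x j \<and> x j \<le> 1" for x k
    using N_mono[of "\<lambda>_. \<delta>" x k] N_mono[of x "\<lambda>_. 1" k] that \<delta> N_const by auto
  have N_lip: "\<bar>N x k - N y k\<bar> \<le> (4 * K + \<Lambda>) * e"
    if "\<And>j. \<delta> \<le> x j \<and> \<delta> \<le> y j \<and> \<bar>x j - y j\<bar> \<le> e" for x y k e
  proof -
    have g: "\<bar>Gb \<beta> (x j) - Gb \<beta> (y j)\<bar> \<le> K * e" for j
    proof -
      have "\<bar>Gb \<beta> (x j) - Gb \<beta> (y j)\<bar> \<le> K * \<bar>x j - y j\<bar>"
        using Gb_lip[OF \<beta> \<delta>(1), of "y j" "x j"] that[of j] unfolding K_def by auto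
      also have "\<dots> \<le> K * e" using that[of j] K0 by (intro mult_left_mono) auto
      finally show ?thesis .
    qed
    have "\<bar>\<Lambda> * x k - \<Lambda> * y k\<bar> \<le> \<Lambda> * e"
      using that[of k] L1 by (simp add: abs_mult right_diff_distrib[symmetric] mult_left_mono)
    then show ?thesis unfolding N_def using g[of "k-1"] g[of k] g[of "k+1"]
      by (simp add: algebra_simps abs_le_iff)
  qed
  define X where "X = rec_nat (\<lambda>t k. \<delta>)
       (\<lambda>n Xn t k. exp (- \<Lambda> * t) * (w k + integral {0..t} (\<lambda>s. exp (\<Lambda> * s) * N (Xn s) k)))"
  define P where "P = (\<lambda>n t k. integral {0..t} (\<lambda>s. exp (\<Lambda> * s) * N (X n s) k))"
  have X0: "X 0 t k = \<delta>" for t k unfolding X_def by simp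
  have XS: "X (Suc n) t k = exp (- \<Lambda> * t) * (w k + P n t k)" for n t k unfolding X_def P_def by simp
  define I where "I = (\<lambda>n. (\<forall>k. continuous_on {0..} (\<lambda>t. X n t k)) \<and> (\<forall>k t. 0 \<le> t \<longrightarrow> \<delta> \<le> X n t k \<and> X n t k \<le> 1))"
  have fcont: "continuous_on {0..} (\<lambda>s. exp (\<Lambda> * s) * N (X n s) k)" if "I n" for n k
  proof -
    have c: "continuous_on {0..} (\<lambda>t. X n t j)" for j using that unfolding I_def by blast
    have p: "0 < X n s j" if "s \<in> {0..}" for s j
    proof -
      have "\<delta> \<le> X n s j" using \<open>I n\<close> that unfolding I_def by simp
      then show ?thesis using \<delta> by linarith
    qed
    show ?thesis unfolding N_def
      by (intro continuous_intros Gb_comp_cont[OF \<beta>(1)] c p)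
  qed
  have Pd: "((\<lambda>t. P n t k) has_real_derivative exp (\<Lambda> * t) * N (X n t) k) (at t)" if "I n" "0 < t" for n k t
    unfolding P_def by (rule prim_props(1)[OF fcont[OF that(1)] that(2)])
  have Pc: "continuous_on {0..} (\<lambda>t. P n t k)" if "I n" for n k
    unfolding P_def by (rule prim_props(2)[OF fcont[OF that]])
  have P0: "P n 0 k = 0" for n k unfolding P_def by simp
  have Xd: "((\<lambda>s. X (Suc n) s k) has_real_derivative - \<Lambda> * X (Suc n) t k + N (X n t) k) (at t)"
    if "I n" "0 < t" for n k t
  proof -
    have "((\<lambda>s. exp (- \<Lambda> * s) * (w k + P n s k)) has_real_derivative
       (- \<Lambda>) * exp (- \<Lambda> * t) * (w k + P n t k) + exp (- \<Lambda> * t) * (exp (\<Lambda> * t) * N (X n t) k)) (at t)"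
      using Pd[OF that] by (auto intro!: derivative_eq_intros)
    moreover have "(- \<Lambda>) * exp (- \<Lambda> * t) * (w k + P n t k) + exp (- \<Lambda> * t) * (exp (\<Lambda> * t) * N (X n t) k)
        = - \<Lambda> * X (Suc n) t k + N (X n t) k"
      unfolding XS by (simp add: exp_minus field_simps)
    ultimately have "((\<lambda>s. exp (- \<Lambda> * s) * (w k + P n s k)) has_real_derivative - \<Lambda> * X (Suc n) t k + N (X n t) k) (at t)"
      by (rule DERIV_cong)
    then show ?thesis by (simp only: XS)
  qed
  have Xc: "continuous_on {0..} (\<lambda>t. X (Suc n) t k)" if "I n" for n k
    unfolding XS by (intro continuous_intros Pc that)
  have IS: "I (Suc n)" if "I n" for n
  proof -
    have bnd: "\<delta> \<le> X (Suc n) t k \<and> X (Suc n) t k \<le> 1" if t: "0 \<le> t" for t k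
    proof -
      have Nb: "\<Lambda> * \<delta> \<le> N (X n s) k \<and> N (X n s) k \<le> \<Lambda>" if "0 \<le> s" for s
        using N_bnd \<open>I n\<close> that unfolding I_def by blast
      have lo: "(\<lambda>s. \<delta> * exp (\<Lambda> * s)) t - (\<lambda>s. \<delta> * exp (\<Lambda> * s)) 0 \<le> P n t k - P n 0 k"
      proof (rule deriv_le_imp_diff_le[OF t])
        show "continuous_on {0..t} (\<lambda>s. \<delta> * exp (\<Lambda> * s))" by (intro continuous_intros)
        show "continuous_on {0..t} (\<lambda>t. P n t k)" using Pc[OF \<open>I n\<close>] by (rule continuous_on_subset) auto
        fix x assume x: "0 < x" "x < t"
        have "\<delta> * (exp (\<Lambda> * x) * \<Lambda>) \<le> exp (\<Lambda> * x) * N (X n x) k"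
          using Nb[of x] x by (simp add: mult.commute mult.left_commute)
        then show "\<exists>df dg. ((\<lambda>s. \<delta> * exp (\<Lambda> * s)) has_real_derivative df) (at x) \<and> ((\<lambda>t. P n t k) has_real_derivative dg) (at x) \<and> df \<le> dg"
          using Pd[OF \<open>I n\<close> x(1)] by (intro exI[of _ "\<delta> * (exp (\<Lambda> * x) * \<Lambda>)"] exI[of _ "exp (\<Lambda> * x) * N (X n x) k"])
             (auto intro!: derivative_eq_intros)
      qed
      have hi: "P n t k - P n 0 k \<le> (\<lambda>s. exp (\<Lambda> * s)) t - (\<lambda>s. exp (\<Lambda> * s)) 0"
      proof (rule deriv_le_imp_diff_le[OF t])
        show "continuous_on {0..t} (\<lambda>s. exp (\<Lambda> * s))" by (intro continuous_intros)
        show "continuous_on {0..t} (\<lambda>t. P n t k)" using Pc[OF \<open>I n\<close>] by (rule continuous_on_subset) auto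
        fix x assume x: "0 < x" "x < t"
        have "exp (\<Lambda> * x) * N (X n x) k \<le> exp (\<Lambda> * x) * \<Lambda>"
          using Nb[of x] x by simp
        then show "\<exists>df dg. ((\<lambda>t. P n t k) has_real_derivative df) (at x) \<and> ((\<lambda>s. exp (\<Lambda> * s)) has_real_derivative dg) (at x) \<and> df \<le> dg"
          using Pd[OF \<open>I n\<close> x(1)] by (intro exI[of _ "exp (\<Lambda> * x) * N (X n x) k"] exI[of _ "exp (\<Lambda> * x) * \<Lambda>"])
             (auto intro!: derivative_eq_intros)
      qed
      have e: "exp (- \<Lambda> * t) * exp (\<Lambda> * t) = 1" by (simp add: exp_minus field_simps)
      have "\<delta> * exp (\<Lambda> * t) \<le> w k + P n t k" using lo P0 wb[of k] by simp
      then have "exp (- \<Lambda> * t) * (\<delta> * exp (\<Lambda> * t)) \<le> exp (- \<Lambda> * t) * (w k + P n t k)"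
        by (intro mult_left_mono) auto
      then have A: "\<delta> \<le> X (Suc n) t k" unfolding XS using e by (simp add: algebra_simps)
      have "w k + P n t k \<le> exp (\<Lambda> * t)" using hi P0 wb[of k] by simp
      then have "exp (- \<Lambda> * t) * (w k + P n t k) \<le> exp (- \<Lambda> * t) * exp (\<Lambda> * t)"
        by (intro mult_left_mono) auto
      then have B: "X (Suc n) t k \<le> 1" unfolding XS using e by linarith
      show ?thesis using A B by simp
    qed
    show ?thesis unfolding I_def using Xc[OF that] bnd by blast
  qed
  have I: "I n" for n
  proof (induction n)
    case 0 show ?case unfolding I_def X0 using \<delta> by auto
  next
    case (Suc n) then show ?case by (rule IS)
  qed
  have Xb: "\<delta> \<le> X n t k \<and> X n t k \<le> 1" if "0 \<le> t" for n t k using I[of n] that unfolding I_def by blast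
  have Xcont: "continuous_on {0..} (\<lambda>t. X n t k)" for n k using I[of n] unfolding I_def by blast
  have mono: "\<forall>k t. 0 \<le> t \<longrightarrow> X n t k \<le> X (Suc n) t k" for n
  proof (induction n)
    case 0 show ?case using Xb X0 by auto
  next
    case (Suc n)
    show ?case
    proof (intro allI impI)
      fix k t :: real assume t: "0 \<le> t"
      fix k :: int
      have "P n t k - P n 0 k \<le> P (Suc n) t k - P (Suc n) 0 k"
      proof (rule deriv_le_imp_diff_le[OF t])
        show "continuous_on {0..t} (\<lambda>t. P n t k)" using Pc[OF I[of n]] by (rule continuous_on_subset) auto
        show "continuous_on {0..t} (\<lambda>t. P (Suc n) t k)" using Pc[OF I[of "Suc n"]] by (rule continuous_on_subset) auto
        fix x assume x: "0 < x" "x < t"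
        have "N (X n x) k \<le> N (X (Suc n) x) k"
          using Suc.IH Xb x by (intro N_mono) auto
        then have "exp (\<Lambda> * x) * N (X n x) k \<le> exp (\<Lambda> * x) * N (X (Suc n) x) k" by simp
        then show "\<exists>df dg. ((\<lambda>t. P n t k) has_real_derivative df) (at x) \<and> ((\<lambda>t. P (Suc n) t k) has_real_derivative dg) (at x) \<and> df \<le> dg"
          using Pd[OF I[of n] x(1)] Pd[OF I[of "Suc n"] x(1)] by blast
      qed
      then show "X (Suc n) t k \<le> X (Suc (Suc n)) t k" unfolding XS P0 by (simp add: mult_left_mono)
    qed
  qed
  have Xlip: "\<bar>X n t k - X n s k\<bar> \<le> \<Lambda> * \<bar>t - s\<bar>" if "0 \<le> s" "0 \<le> t" for n s t k
  proof (cases n)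
    case 0 then show ?thesis using X0 L1 by simp
  next
    case (Suc m)
    have gen: "\<bar>X n b k - X n a k\<bar> \<le> \<Lambda> * (b - a)" if ab: "0 \<le> a" "a \<le> b" for a b
    proof (rule deriv_abs_bound[OF ab(2)])
      show "continuous_on {a..b} (\<lambda>t. X n t k)" using Xcont by (rule continuous_on_subset) (use ab in auto)
      fix y assume y: "a < y" "y < b"
      have y0: "0 \<le> y" using y ab by simp
      have xb: "\<delta> \<le> X (Suc m) y k" "X (Suc m) y k \<le> 1" using Xb[OF y0, of "Suc m" k] by auto
      have nb: "\<Lambda> * \<delta> \<le> N (X m y) k" "N (X m y) k \<le> \<Lambda>" using N_bnd[of "X m y" k] Xb[OF y0, of m] by auto
      have m1: "\<Lambda> * \<delta> \<le> \<Lambda> * X (Suc m) y k" using xb(1) L1 by (intro mult_left_mono) auto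
      have m2: "\<Lambda> * X (Suc m) y k \<le> \<Lambda> * 1" using xb(2) L1 by (intro mult_left_mono) auto
      have m3: "0 \<le> \<Lambda> * \<delta>" using L1 \<delta> by simp
      have "\<bar>- \<Lambda> * X (Suc m) y k + N (X m y) k\<bar> \<le> \<Lambda>"
        using nb m1 m2 m3 by (simp add: abs_le_iff)
      then show "\<exists>d. ((\<lambda>t. X n t k) has_real_derivative d) (at y) \<and> \<bar>d\<bar> \<le> \<Lambda>"
        using Xd[OF I[of m], of y k] y ab unfolding Suc by auto
    qed
    show ?thesis
    proof (cases "s \<le> t")
      case True then show ?thesis using gen[of s t] that by simp
    next
      case False then show ?thesis using gen[of t s] that by (simp add: abs_minus_commute)
    qed
  qed
  define u where "u = (\<lambda>t k. SUP n. X n t k)"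
  have conv: "(\<lambda>n. X n t k) \<longlonglongrightarrow> u t k" if "0 \<le> t" for t k
    unfolding u_def
  proof (rule LIMSEQ_incseq_SUP)
    show "bdd_above (range (\<lambda>n. X n t k))" using Xb[OF that] by (intro bdd_aboveI[of _ 1]) auto
    show "incseq (\<lambda>n. X n t k)" using mono that by (intro incseq_SucI) auto
  qed
  have ub: "\<delta> \<le> u t k \<and> u t k \<le> 1" if "0 \<le> t" for t k
    using conv[OF that, of k] Xb[OF that] by (auto intro: LIMSEQ_le_const LIMSEQ_le_const2)
  have u0: "u 0 k = w k" for k
  proof -
    have "(\<lambda>n. X (Suc n) 0 k) \<longlonglongrightarrow> u 0 k" using LIMSEQ_Suc[OF conv[of 0 k]] by simp
    moreover have "X (Suc n) 0 k = w k" for n unfolding XS P0 by simp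
    ultimately show ?thesis by (simp add: LIMSEQ_const_iff)
  qed
  have ulip: "\<bar>u t k - u s k\<bar> \<le> \<Lambda> * \<bar>t - s\<bar>" if "0 \<le> s" "0 \<le> t" for s t k
  proof -
    have "(\<lambda>n. \<bar>X n t k - X n s k\<bar>) \<longlonglongrightarrow> \<bar>u t k - u s k\<bar>"
      using conv[OF that(1)] conv[OF that(2)] by (intro tendsto_intros)
    then show ?thesis using Xlip[OF that] by (intro LIMSEQ_le_const2) auto
  qed
  have ucont: "continuous_on {0..} (\<lambda>t. u t k)" for k
  proof (rule lipschitz_on_continuous_on)
    show "\<Lambda>-lipschitz_on {0..} (\<lambda>t. u t k)"
      unfolding lipschitz_on_def dist_real_def using ulip L1 by auto
  qed
  have uder: "((\<lambda>s. u s k) has_real_derivative dlap (\<lambda>j. Gb \<beta> (u t j)) k) (at t)" if t: "0 < t" for t k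
  proof -
    define M where "M = \<Lambda> * \<Lambda> + (4 * K + \<Lambda>) * \<Lambda>"
    have "((\<lambda>s. u s k) has_real_derivative - \<Lambda> * u t k + N (u t) k) (at t)"
    proof (rule deriv_limit[where f="\<lambda>n s. X (Suc n) s k" and D="\<lambda>n s. - \<Lambda> * X (Suc n) s k + N (X n s) k" and M=M, OF t])
      fix n x assume x: "\<bar>x - t\<bar> < t"
      then show "((\<lambda>s. X (Suc n) s k) has_real_derivative - \<Lambda> * X (Suc n) x k + N (X n x) k) (at x)"
        by (intro Xd I) auto
      have x0: "0 \<le> x" using x by auto
      have "\<bar>N (X n x) k - N (X n t) k\<bar> \<le> (4 * K + \<Lambda>) * (\<Lambda> * \<bar>x - t\<bar>)"
        using Xb[OF x0] Xb[of t] Xlip[OF _ x0, of t] t by (intro N_lip) auto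
      moreover have "\<bar>X (Suc n) x k - X (Suc n) t k\<bar> \<le> \<Lambda> * \<bar>x - t\<bar>" using Xlip[OF _ x0, of t] t by auto
      ultimately have "\<bar>\<Lambda> * (X (Suc n) x k - X (Suc n) t k)\<bar> + \<bar>N (X n x) k - N (X n t) k\<bar> \<le> \<Lambda> * (\<Lambda> * \<bar>x - t\<bar>) + (4 * K + \<Lambda>) * (\<Lambda> * \<bar>x - t\<bar>)"
        using L1 by (simp add: abs_mult mult_left_mono add_mono)
      then show "\<bar>- \<Lambda> * X (Suc n) x k + N (X n x) k - (- \<Lambda> * X (Suc n) t k + N (X n t) k)\<bar> \<le> M * \<bar>x - t\<bar>"
        unfolding M_def by (simp add: algebra_simps)
    next
      fix x assume x: "\<bar>x - t\<bar> < t"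
      then show "(\<lambda>n. X (Suc n) x k) \<longlonglongrightarrow> u x k" using LIMSEQ_Suc[OF conv] by auto
    next
      have pos: "0 < u t j" for j using ub[of t j] t \<delta> by auto
      have gc: "isCont (Gb \<beta>) (u t j)" for j
        using Gb_cont[OF \<beta>(1)] pos[of j] by (simp add: continuous_on_eq_continuous_at)
      have "(\<lambda>n. Gb \<beta> (X n t j)) \<longlonglongrightarrow> Gb \<beta> (u t j)" for j
        using isCont_tendsto_compose[OF gc conv] t by auto
      then show "(\<lambda>n. - \<Lambda> * X (Suc n) t k + N (X n t) k) \<longlonglongrightarrow> - \<Lambda> * u t k + N (u t) k"
        unfolding N_def using conv[of t] LIMSEQ_Suc[OF conv[of t k]] t
        by (intro tendsto_intros) auto
    qed
    moreover have "- \<Lambda> * u t k + N (u t) k = dlap (\<lambda>j. Gb \<beta> (u t j)) k"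
      unfolding N_def dlap_def by simp
    ultimately show ?thesis by simp
  qed
  show ?thesis
    by (intro exI[of _ u] conjI allI impI u0 ub ucont uder) auto
qed



definition gam :: "real \<Rightarrow> real" where "gam \<beta> = 1 / (1 - \<beta>)"
definition thet :: "real \<Rightarrow> real" where "thet \<beta> = min (1 / (2 * gam \<beta>)) ((1/4) powr (1/\<beta>))"
definition ee :: "real \<Rightarrow> nat \<Rightarrow> nat \<Rightarrow> real" where
  "ee \<beta> L n = 4 powr (-\<beta>) + real n * (2 * real L + 2 - real n)"
definition EE :: "real \<Rightarrow> nat \<Rightarrow> real" where "EE \<beta> L = 4 powr (-\<beta>) + (real L + 1)^2"
definition aa :: "real \<Rightarrow> nat \<Rightarrow> nat \<Rightarrow> real" where
  "aa \<beta> L n = (if 0 < \<beta> then thet \<beta> ^ n / 4 else ee \<beta> L n powr (1/\<beta>))"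
definition amin :: "real \<Rightarrow> nat \<Rightarrow> real" where
  "amin \<beta> L = (if 0 < \<beta> then thet \<beta> ^ L / 4 else EE \<beta> L powr (1/\<beta>))"
definition BB :: "real \<Rightarrow> nat \<Rightarrow> real" where "BB \<beta> L = 2 + 2 * EE \<beta> L / gam \<beta>"
definition S0 :: "real \<Rightarrow> nat \<Rightarrow> real" where
  "S0 \<beta> L = min 1 (min (1 / (8 * BB \<beta> L)) ((1 / (8 * BB \<beta> L)) powr (1 / gam \<beta>)))"

lemma gam_pos: "\<beta> < 1 \<Longrightarrow> 0 < gam \<beta>" unfolding gam_def by simp
lemma gam_gt1: "0 < \<beta> \<Longrightarrow> \<beta> < 1 \<Longrightarrow> 1 < gam \<beta>" unfolding gam_def by (simp add: field_simps)
lemma gam_lt1: "\<beta> < 0 \<Longrightarrow> gam \<beta> < 1" unfolding gam_def by (simp add: field_simps)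
lemma gam_m1: "\<beta> < 1 \<Longrightarrow> gam \<beta> - 1 = gam \<beta> * \<beta>" unfolding gam_def by (simp add: field_simps)

lemma e0_pos: "0 < (4::real) powr (-\<beta>)" by simp
lemma e0_ge1: "\<beta> < 0 \<Longrightarrow> 1 \<le> (4::real) powr (-\<beta>)" by (rule ge_one_powr_ge_zero) auto

lemma ee_ge: "n \<le> 2 * L + 2 \<Longrightarrow> 4 powr (-\<beta>) \<le> ee \<beta> L n"
  unfolding ee_def by (simp add: of_nat_le_iff[symmetric])
lemma ee_le: "n \<le> L + 1 \<Longrightarrow> ee \<beta> L n \<le> EE \<beta> L"
proof -
  have eq: "(real L + 1)^2 - real n * (2 * real L + 2 - real n) = (real L + 1 - real n)^2"
    by (simp add: power2_eq_square algebra_simps)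
  have "0 \<le> (real L + 1 - real n)^2" by simp
  then have "real n * (2 * real L + 2 - real n) \<le> (real L + 1)^2" using eq by linarith
  then show ?thesis unfolding ee_def EE_def by simp
qed
lemma ee_pos: "n \<le> 2 * L + 2 \<Longrightarrow> 0 < ee \<beta> L n"
  using ee_ge[of n L \<beta>] e0_pos[of \<beta>] by linarith
lemma ee_2nd: "1 \<le> d \<Longrightarrow> 2 * ee \<beta> L d - ee \<beta> L (d - 1) - ee \<beta> L (d + 1) = 2"
  unfolding ee_def by (simp add: of_nat_diff algebra_simps)

lemma EE_pos: "0 < EE \<beta> L" unfolding EE_def using e0_pos[of \<beta>] by (smt (verit) zero_le_power2)
lemma EE_ge: "4 powr (-\<beta>) \<le> EE \<beta> L" unfolding EE_def by simp

lemma four_pow: "\<beta> \<noteq> 0 \<Longrightarrow> ((4::real) powr (-\<beta>)) powr (1/\<beta>) = 1/4"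
proof -
  assume b: "\<beta> \<noteq> 0"
  have "((4::real) powr (-\<beta>)) powr (1/\<beta>) = 4 powr (-\<beta> * (1/\<beta>))" by (rule powr_powr)
  also have "-\<beta> * (1/\<beta>) = - 1" using b by simp
  also have "(4::real) powr (- 1) = 1/4" by (simp add: powr_minus_divide)
  finally show ?thesis .
qed

lemma thet_pos: "0 < \<beta> \<Longrightarrow> \<beta> < 1 \<Longrightarrow> 0 < thet \<beta>"
  unfolding thet_def using gam_pos[of \<beta>] by simp
lemma thet_le1: "0 < \<beta> \<Longrightarrow> thet \<beta> \<le> 1"
proof -
  assume b: "0 < \<beta>"
  have "(1/4::real) powr (1/\<beta>) \<le> 1" by (rule powr_le1) (use b in auto)
  then show ?thesis unfolding thet_def by linarith
qed
lemma thet_powr: "0 < \<beta> \<Longrightarrow> \<beta> < 1 \<Longrightarrow> thet \<beta> powr \<beta> \<le> 1/4"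
proof -
  assume b: "0 < \<beta>" "\<beta> < 1"
  have "thet \<beta> \<le> (1/4) powr (1/\<beta>)" unfolding thet_def by simp
  then have "thet \<beta> powr \<beta> \<le> ((1/4) powr (1/\<beta>)) powr \<beta>"
    using thet_pos[OF b] b by (intro powr_mono2) auto
  also have "\<dots> = 1/4" using b by (simp add: powr_powr)
  finally show ?thesis .
qed
lemma thet_gam: "\<beta> < 1 \<Longrightarrow> thet \<beta> * gam \<beta> \<le> 1/2"
proof -
  assume b: "\<beta> < 1"
  have "thet \<beta> \<le> 1 / (2 * gam \<beta>)" unfolding thet_def by simp
  then have "thet \<beta> * gam \<beta> \<le> 1 / (2 * gam \<beta>) * gam \<beta>" using gam_pos[OF b] by (intro mult_right_mono) auto
  also have "\<dots> = 1/2" using gam_pos[OF b] by simp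
  finally show ?thesis .
qed

lemma aa_bounds:
  assumes b: "\<beta> < 0 \<or> (0 < \<beta> \<and> \<beta> < 1)" and d: "1 \<le> d" "d \<le> L"
  shows "amin \<beta> L \<le> aa \<beta> L d" "aa \<beta> L d \<le> 1/4" "0 < amin \<beta> L"
proof -
  show "amin \<beta> L \<le> aa \<beta> L d"
  proof (cases "0 < \<beta>")
    case True
    have tp: "0 \<le> thet \<beta>" "thet \<beta> \<le> 1" using True b thet_pos[of \<beta>] thet_le1[of \<beta>] by auto
    have "thet \<beta> ^ L \<le> thet \<beta> ^ d"
      using tp d by (intro power_decreasing) auto
    then show ?thesis unfolding amin_def aa_def using True by simp
  next
    case False
    then have bn: "\<beta> < 0" using b by auto
    have "EE \<beta> L powr (1/\<beta>) \<le> ee \<beta> L d powr (1/\<beta>)"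
      using bn ee_le[of d L \<beta>] ee_pos[of d L \<beta>] d by (intro powr_mono2') auto
    then show ?thesis unfolding amin_def aa_def using False by simp
  qed
  show "aa \<beta> L d \<le> 1/4"
  proof (cases "0 < \<beta>")
    case True
    have tp: "0 \<le> thet \<beta>" "thet \<beta> \<le> 1" using True b thet_pos[of \<beta>] thet_le1[of \<beta>] by auto
    have "thet \<beta> ^ d \<le> 1" using tp by (intro power_le_one) auto
    then show ?thesis unfolding aa_def using True by simp
  next
    case False
    then have bn: "\<beta> < 0" using b by auto
    have "ee \<beta> L d powr (1/\<beta>) \<le> (4 powr (-\<beta>)) powr (1/\<beta>)"
      using bn ee_ge[of d L \<beta>] e0_pos[of \<beta>] d by (intro powr_mono2') auto
    then show ?thesis unfolding aa_def using False four_pow[of \<beta>] bn by simp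
  qed
  show "0 < amin \<beta> L"
    unfolding amin_def using thet_pos[of \<beta>] b EE_pos[of \<beta> L] by auto
qed

lemma amin_le: "\<beta> < 0 \<or> (0 < \<beta> \<and> \<beta> < 1) \<Longrightarrow> amin \<beta> L \<le> 1/4"
proof -
  assume b: "\<beta> < 0 \<or> (0 < \<beta> \<and> \<beta> < 1)"
  show ?thesis
  proof (cases "0 < \<beta>")
    case True
    have tp: "0 \<le> thet \<beta>" "thet \<beta> \<le> 1" using True b thet_pos[of \<beta>] thet_le1[of \<beta>] by auto
    have "thet \<beta> ^ L \<le> 1" using tp by (intro power_le_one) auto
    then show ?thesis unfolding amin_def using True by simp
  next
    case False
    then have bn: "\<beta> < 0" using b by auto
    have "EE \<beta> L powr (1/\<beta>) \<le> (4 powr (-\<beta>)) powr (1/\<beta>)"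
      using bn EE_ge[of \<beta> L] e0_pos[of \<beta>] by (intro powr_mono2') auto
    then show ?thesis unfolding amin_def using False four_pow[of \<beta>] bn by simp
  qed
qed

lemma aa_pos: "\<beta> < 0 \<or> (0 < \<beta> \<and> \<beta> < 1) \<Longrightarrow> d \<le> 2 * L + 2 \<Longrightarrow> 0 < aa \<beta> L d"
  unfolding aa_def using thet_pos[of \<beta>] ee_pos[of d L \<beta>] by auto

lemma aa_powr_neg: "\<beta> < 0 \<Longrightarrow> d \<le> 2 * L + 2 \<Longrightarrow> aa \<beta> L d powr \<beta> = ee \<beta> L d"
  unfolding aa_def using ee_pos[of d L \<beta>] by (simp add: powr_powr)

lemma aa0: "\<beta> < 0 \<or> (0 < \<beta> \<and> \<beta> < 1) \<Longrightarrow> aa \<beta> L 0 = 1/4"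
  unfolding aa_def ee_def using four_pow[of \<beta>] by auto

lemma condP:
  assumes b: "0 < \<beta>" "\<beta> < 1" and d: "1 \<le> d"
  shows "aa \<beta> L d * gam \<beta> + 2 * aa \<beta> L d powr \<beta> \<le> aa \<beta> L (d - 1) powr \<beta>"
proof -
  define a where "a = aa \<beta> L (d - 1)"
  have a: "a = thet \<beta> ^ (d - 1) / 4" unfolding a_def aa_def using b by simp
  have ad: "aa \<beta> L d = thet \<beta> * a" unfolding a aa_def using b d
    by (simp add: power_eq_if[of _ d])
  have a0: "0 < a" unfolding a using thet_pos[OF b] by simp
  have "thet \<beta> ^ (d - 1) \<le> 1" using thet_pos[OF b] thet_le1[OF b(1)] by (intro power_le_one) auto
  then have a1: "a \<le> 1" unfolding a by simp
  have "a \<le> a powr \<beta>"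
  proof -
    have "a powr 1 \<le> a powr \<beta>" using a0 a1 b by (intro powr_mono') auto
    then show ?thesis using a0 by simp
  qed
  have t1: "thet \<beta> * a * gam \<beta> \<le> a / 2"
    using thet_gam[OF b(2)] a0 by (simp add: mult.commute mult.left_commute)
  have t2: "(thet \<beta> * a) powr \<beta> = thet \<beta> powr \<beta> * a powr \<beta>"
    using a0 thet_pos[OF b] by (simp add: powr_mult)
  have "thet \<beta> powr \<beta> * a powr \<beta> \<le> 1/4 * a powr \<beta>"
    using thet_powr[OF b] by (intro mult_right_mono) auto
  then show ?thesis unfolding ad t2 using t1 \<open>a \<le> a powr \<beta>\<close> unfolding a_def by linarith
qed

lemma condN:
  assumes b: "\<beta> < 0" and d: "1 \<le> d" "d \<le> L"
  shows "aa \<beta> L d * gam \<beta> \<le> 2 * ee \<beta> L d - ee \<beta> L (d - 1) - ee \<beta> L (d + 1)"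
proof -
  have "aa \<beta> L d \<le> 1/4" using aa_bounds(2)[of \<beta> d L] b d by auto
  moreover have "0 < aa \<beta> L d" using aa_pos[of \<beta> d L] b d by auto
  moreover have "gam \<beta> < 1" "0 < gam \<beta>" using gam_lt1[OF b] gam_pos[of \<beta>] b by auto
  ultimately have "aa \<beta> L d * gam \<beta> \<le> 1/4 * 1" by (intro mult_mono) auto
  then have "aa \<beta> L d * gam \<beta> \<le> 2" by simp
  then show ?thesis using ee_2nd[OF d(1)] by simp
qed

lemma BB_props: "\<beta> < 1 \<Longrightarrow> 2 \<le> BB \<beta> L \<and> 2 * EE \<beta> L \<le> BB \<beta> L * gam \<beta>"
proof -
  assume b: "\<beta> < 1"
  have g: "0 < gam \<beta>" using gam_pos[OF b] .
  have "0 \<le> 2 * EE \<beta> L / gam \<beta>" using EE_pos[of \<beta> L] g by simp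
  moreover have "BB \<beta> L * gam \<beta> = 2 * gam \<beta> + 2 * EE \<beta> L" unfolding BB_def using g by (simp add: field_simps)
  ultimately show ?thesis unfolding BB_def using g by simp
qed

lemma S0_props:
  assumes b: "\<beta> < 1" 
  shows "0 < S0 \<beta> L" "S0 \<beta> L \<le> 1"
    and "\<And>s. 0 \<le> s \<Longrightarrow> s \<le> S0 \<beta> L \<Longrightarrow> BB \<beta> L * (s + s powr gam \<beta>) \<le> 1/4"
proof -
  have B2: "2 \<le> BB \<beta> L" using BB_props[OF b] by simp
  have g: "0 < gam \<beta>" using gam_pos[OF b] .
  define c where "c = 1 / (8 * BB \<beta> L)"
  have c0: "0 < c" unfolding c_def using B2 by simp
  show "0 < S0 \<beta> L" unfolding S0_def c_def[symmetric] using c0 by simp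
  show "S0 \<beta> L \<le> 1" unfolding S0_def by simp
  fix s assume s: "0 \<le> s" "s \<le> S0 \<beta> L"
  have s1: "s \<le> c" using s unfolding S0_def c_def by simp
  have "s \<le> c powr (1 / gam \<beta>)" using s unfolding S0_def c_def by simp
  then have "s powr gam \<beta> \<le> (c powr (1 / gam \<beta>)) powr gam \<beta>" using s g by (intro powr_mono2) auto
  also have "\<dots> = c" using g c0 by (simp add: powr_powr)
  finally have s2: "s powr gam \<beta> \<le> c" .
  have "BB \<beta> L * (s + s powr gam \<beta>) \<le> BB \<beta> L * (c + c)" using s1 s2 B2 by (intro mult_left_mono) auto
  also have "\<dots> = 1/4" unfolding c_def using B2 by simp
  finally show "BB \<beta> L * (s + s powr gam \<beta>) \<le> 1/4" .
qed



definition VV :: "real \<Rightarrow> nat \<Rightarrow> (int \<Rightarrow> nat) \<Rightarrow> real \<Rightarrow> int \<Rightarrow> real" where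
  "VV \<beta> L dd s k = (if dd k = 0 then 1/2 - BB \<beta> L * (s + s powr gam \<beta>) else aa \<beta> L (dd k) * s powr gam \<beta>)"
definition VVd :: "real \<Rightarrow> nat \<Rightarrow> (int \<Rightarrow> nat) \<Rightarrow> real \<Rightarrow> int \<Rightarrow> real" where
  "VVd \<beta> L dd s k = (if dd k = 0 then - BB \<beta> L * (1 + gam \<beta> * s powr (gam \<beta> - 1))
      else aa \<beta> L (dd k) * (gam \<beta> * s powr (gam \<beta> - 1)))"

lemma VV_deriv: "0 < s \<Longrightarrow> ((\<lambda>s. VV \<beta> L dd s k) has_real_derivative VVd \<beta> L dd s k) (at s)"
  unfolding VV_def VVd_def
  by (cases "dd k = 0") (auto intro!: derivative_eq_intros)

lemma VV_cont: "continuous_on {0<..} (\<lambda>s. VV \<beta> L dd s k)"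
  by (rule DERIV_continuous_on[OF has_field_derivative_at_within[OF VV_deriv]]) auto

lemma amin_pos: "\<beta> < 0 \<or> (0 < \<beta> \<and> \<beta> < 1) \<Longrightarrow> 0 < amin \<beta> L"
  unfolding amin_def using thet_pos[of \<beta>] EE_pos[of \<beta> L] by auto

lemma Gb_posf: "0 < \<beta> \<Longrightarrow> Gb \<beta> x = x powr \<beta>" unfolding Gb_def by simp
lemma Gb_negf: "\<beta> < 0 \<Longrightarrow> Gb \<beta> x = - (x powr \<beta>)" unfolding Gb_def by simp

lemma VV_bounds:
  assumes b: "\<beta> < 0 \<or> (0 < \<beta> \<and> \<beta> < 1)" and ddL: "\<And>k. dd k \<le> L"
    and s: "0 < s" "s \<le> S0 \<beta> L"
  shows "dd k = 0 \<Longrightarrow> 1/4 \<le> VV \<beta> L dd s k \<and> VV \<beta> L dd s k \<le> 1/2"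
    and "dd k \<noteq> 0 \<Longrightarrow> amin \<beta> L * s powr gam \<beta> \<le> VV \<beta> L dd s k \<and> VV \<beta> L dd s k \<le> 1/4"
    and "amin \<beta> L * s powr gam \<beta> \<le> VV \<beta> L dd s k" "0 < VV \<beta> L dd s k" "VV \<beta> L dd s k \<le> 1/2"
proof -
  have b1: "\<beta> < 1" using b by auto
  have S: "0 < S0 \<beta> L" "S0 \<beta> L \<le> 1" "BB \<beta> L * (s + s powr gam \<beta>) \<le> 1/4"
    using S0_props[OF b1] s by auto
  have B0: "0 \<le> BB \<beta> L * (s + s powr gam \<beta>)"
  proof -
    have "2 \<le> BB \<beta> L" using BB_props[OF b1, of L] by simp
    moreover have "0 \<le> s + s powr gam \<beta>" using s by simp
    ultimately show ?thesis by simp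
  qed
  have sg: "0 < s powr gam \<beta>" "s powr gam \<beta> \<le> 1" using s S gam_pos[OF b1] by (auto intro: powr_le1)
  have am: "0 < amin \<beta> L" "amin \<beta> L \<le> 1/4" using amin_pos[OF b] amin_le[OF b] by auto
  show full: "1/4 \<le> VV \<beta> L dd s k \<and> VV \<beta> L dd s k \<le> 1/2" if "dd k = 0"
    using that S B0 unfolding VV_def by simp
  show gap: "amin \<beta> L * s powr gam \<beta> \<le> VV \<beta> L dd s k \<and> VV \<beta> L dd s k \<le> 1/4" if "dd k \<noteq> 0"
  proof -
    have ab: "amin \<beta> L \<le> aa \<beta> L (dd k)" "aa \<beta> L (dd k) \<le> 1/4" using aa_bounds(1,2)[OF b, of "dd k" L] that ddL[of k] by auto
    have "amin \<beta> L * s powr gam \<beta> \<le> aa \<beta> L (dd k) * s powr gam \<beta>" using ab sg by (intro mult_right_mono) auto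
    moreover have "aa \<beta> L (dd k) * s powr gam \<beta> \<le> 1/4 * 1" using ab sg am by (intro mult_mono) auto
    ultimately show ?thesis using that unfolding VV_def by simp
  qed
  show "amin \<beta> L * s powr gam \<beta> \<le> VV \<beta> L dd s k"
  proof (cases "dd k = 0")
    case True
    have "amin \<beta> L * s powr gam \<beta> \<le> 1/4 * 1" using am sg by (intro mult_mono) auto
    then show ?thesis using full[OF True] by simp
  next
    case False then show ?thesis using gap by simp
  qed
  show "0 < VV \<beta> L dd s k"
  proof (cases "dd k = 0")
    case True then show ?thesis using full[OF True] by simp
  next
    case False
    have "0 < amin \<beta> L * s powr gam \<beta>" using am sg by simp
    then show ?thesis using gap[OF False] by simp
  qed
  show "VV \<beta> L dd s k \<le> 1/2"
    using full gap by (cases "dd k = 0") auto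
qed

lemma quarter_powr: "(1/4::real) powr \<beta> = 4 powr (-\<beta>)"
  by (simp add: powr_divide powr_minus_divide)

lemma VV_sub:
  assumes b: "\<beta> < 0 \<or> (0 < \<beta> \<and> \<beta> < 1)" and ddL: "\<And>k. dd k \<le> L"
    and ddl: "\<And>k. dd k \<noteq> 0 \<Longrightarrow> dd (k - 1) = dd k - 1"
    and ddr: "\<And>k. dd (k + 1) = 0 \<or> dd (k + 1) = dd k + 1"
    and s: "0 < s" "s \<le> S0 \<beta> L"
  shows "VVd \<beta> L dd s k \<le> dlap (\<lambda>j. Gb \<beta> (VV \<beta> L dd s j)) k"
proof -
  have b1: "\<beta> < 1" using b by auto
  have g: "0 < gam \<beta>" using gam_pos[OF b1] .
  have S: "S0 \<beta> L \<le> 1" using S0_props[OF b1] by auto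
  have s1: "s \<le> 1" using s S by simp
  define q where "q = s powr (gam \<beta> - 1)"
  have q0: "0 < q" unfolding q_def using s by simp
  have sq: "(s powr gam \<beta>) powr \<beta> = q" unfolding q_def powr_powr gam_m1[OF b1] by simp
  have gapG: "(VV \<beta> L dd s j) powr \<beta> = aa \<beta> L (dd j) powr \<beta> * q" if "dd j \<noteq> 0" for j
    using that s aa_pos[OF b, of "dd j" L] ddL[of j] unfolding VV_def
    by (simp add: powr_mult sq)
  note bnd = VV_bounds[where \<beta>=\<beta> and dd=dd and L=L and s=s, OF b ddL s]
  have Bp: "2 \<le> BB \<beta> L" "2 * EE \<beta> L \<le> BB \<beta> L * gam \<beta>" using BB_props[OF b1, of L] by auto
  show ?thesis
  proof (cases "0 < \<beta>")
    case True
    have q1: "q \<le> 1" unfolding q_def using s1 s gam_gt1[OF True b1] by (intro powr_le1) auto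
    have G: "Gb \<beta> x = x powr \<beta>" for x using Gb_posf[OF True] .
    have Gr: "0 \<le> Gb \<beta> (VV \<beta> L dd s j) \<and> Gb \<beta> (VV \<beta> L dd s j) \<le> 1" for j
      unfolding G using bnd(4,5)[where k=j] True by (auto intro: powr_le1)
    show ?thesis
    proof (cases "dd k = 0")
      case True
      have "VVd \<beta> L dd s k \<le> - BB \<beta> L"
        unfolding VVd_def using True Bp g q0 by (simp add: mult_nonneg_nonneg)
      then show ?thesis unfolding dlap_def using Gr[of "k-1"] Gr[of k] Gr[of "k+1"] Bp by linarith
    next
      case False
      define d where "d = dd k"
      have d1: "1 \<le> d" using False unfolding d_def by simp
      have left: "aa \<beta> L (d - 1) powr \<beta> * q \<le> Gb \<beta> (VV \<beta> L dd s (k - 1))"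
      proof (cases "d = 1")
        case True
        then have "dd (k - 1) = 0" using ddl[OF False] unfolding d_def by simp
        then have "1/4 \<le> VV \<beta> L dd s (k - 1)" using bnd(1) by blast
        then have v4: "(1/4) powr \<beta> \<le> VV \<beta> L dd s (k - 1) powr \<beta>" using \<open>0 < \<beta>\<close> by (intro powr_mono2) auto
        have a0: "aa \<beta> L (d - 1) = 1/4" using True aa0[OF b, of L] by simp
        have "aa \<beta> L (d - 1) powr \<beta> * q = (1/4) powr \<beta> * q" by (simp only: a0)
        also have "\<dots> \<le> (1/4) powr \<beta>" using q1 by (intro mult_left_le) auto
        also have "\<dots> \<le> VV \<beta> L dd s (k - 1) powr \<beta>" using v4 .
        finally show ?thesis unfolding G .
      next
        case False
        then have "dd (k - 1) = d - 1" "dd (k - 1) \<noteq> 0" using ddl[OF \<open>dd k \<noteq> 0\<close>] d1 unfolding d_def by auto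
        then show ?thesis unfolding G using gapG[of "k - 1"] by simp
      qed
      have mid: "Gb \<beta> (VV \<beta> L dd s k) = aa \<beta> L d powr \<beta> * q" unfolding G d_def using gapG[OF False] .
      have cp: "(aa \<beta> L d * gam \<beta> + 2 * aa \<beta> L d powr \<beta>) * q \<le> aa \<beta> L (d - 1) powr \<beta> * q"
        using condP[OF True b1 d1, of L] q0 by (intro mult_right_mono) auto
      have "VVd \<beta> L dd s k = aa \<beta> L d * gam \<beta> * q" unfolding VVd_def q_def d_def using False by simp
      then show ?thesis unfolding dlap_def using left mid cp Gr[of "k+1"] by (simp add: algebra_simps)
    qed
  next
    case False
    then have bn: "\<beta> < 0" using b by auto
    have q1: "1 \<le> q"
    proof -
      have "s powr 0 \<le> s powr (gam \<beta> - 1)" using s s1 gam_lt1[OF bn] by (intro powr_mono') auto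
      then show ?thesis unfolding q_def using s by simp
    qed
    have G: "Gb \<beta> x = - (x powr \<beta>)" for x using Gb_negf[OF bn] .
    have fullP: "VV \<beta> L dd s j powr \<beta> \<le> 4 powr (-\<beta>) * q" if "dd j = 0" for j
    proof -
      have "1/4 \<le> VV \<beta> L dd s j" using bnd(1)[where k=j, OF that] by simp
      then have "VV \<beta> L dd s j powr \<beta> \<le> (1/4) powr \<beta>" using bn by (intro powr_mono2') auto
      also have "(1/4) powr \<beta> = 4 powr (-\<beta>) * 1" by (simp add: quarter_powr)
      also have "\<dots> \<le> 4 powr (-\<beta>) * q" using q1 by (intro mult_left_mono) auto
      finally show ?thesis .
    qed
    have P0: "0 \<le> VV \<beta> L dd s j powr \<beta>" for j by simp
    show ?thesis
    proof (cases "dd k = 0")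
      case True
      have Pb: "VV \<beta> L dd s j powr \<beta> \<le> EE \<beta> L * q" for j
      proof (cases "dd j = 0")
        case True
        have "4 powr (-\<beta>) * q \<le> EE \<beta> L * q" using EE_ge[of \<beta> L] q0 by (intro mult_right_mono) auto
        then show ?thesis using fullP[OF True] by simp
      next
        case False
        have "ee \<beta> L (dd j) * q \<le> EE \<beta> L * q" using ee_le[of "dd j" L \<beta>] ddL[of j] q0 by (intro mult_right_mono) auto
        then show ?thesis using gapG[OF False] aa_powr_neg[OF bn, of "dd j" L] ddL[of j] by simp
      qed
      have "VVd \<beta> L dd s k \<le> - BB \<beta> L * gam \<beta> * q"
        unfolding VVd_def q_def using True Bp g q0 by (simp add: algebra_simps)
      also have "\<dots> \<le> - 2 * EE \<beta> L * q" using Bp(2) q0 by (simp add: mult_right_mono)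
      finally show ?thesis unfolding dlap_def G using Pb[of "k-1"] Pb[of "k+1"] P0[of k] by linarith
    next
      case False
      define d where "d = dd k"
      have d1: "1 \<le> d" and dL: "d \<le> L" using False ddL[of k] unfolding d_def by auto
      have left: "VV \<beta> L dd s (k - 1) powr \<beta> \<le> ee \<beta> L (d - 1) * q"
      proof (cases "d = 1")
        case True
        then have "dd (k - 1) = 0" using ddl[OF False] unfolding d_def by simp
        then show ?thesis using fullP True unfolding ee_def by simp
      next
        case False
        then have "dd (k - 1) = d - 1" "dd (k - 1) \<noteq> 0" using ddl[OF \<open>dd k \<noteq> 0\<close>] d1 unfolding d_def by auto
        then show ?thesis using gapG[of "k - 1"] aa_powr_neg[OF bn, of "d - 1" L] dL by simp
      qed
      have right: "VV \<beta> L dd s (k + 1) powr \<beta> \<le> ee \<beta> L (d + 1) * q"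
      proof (cases "dd (k + 1) = 0")
        case True
        have "4 powr (-\<beta>) * q \<le> ee \<beta> L (d + 1) * q" using ee_ge[of "d + 1" L \<beta>] dL q0 by (intro mult_right_mono) auto
        then show ?thesis using fullP[OF True] by simp
      next
        case False
        then have "dd (k + 1) = d + 1" using ddr[of k] unfolding d_def by auto
        then show ?thesis using gapG[OF False] aa_powr_neg[OF bn, of "d + 1" L] dL by simp
      qed
      have mid: "VV \<beta> L dd s k powr \<beta> = ee \<beta> L d * q"
        using gapG[OF False] aa_powr_neg[OF bn, of d L] dL unfolding d_def by simp
      have cn: "aa \<beta> L d * gam \<beta> * q \<le> (2 * ee \<beta> L d - ee \<beta> L (d - 1) - ee \<beta> L (d + 1)) * q"
        using condN[OF bn d1 dL] q0 by (intro mult_right_mono) auto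
      have "VVd \<beta> L dd s k = aa \<beta> L d * gam \<beta> * q" unfolding VVd_def q_def d_def using False by simp
      then show ?thesis unfolding dlap_def G using left right mid cn by (simp add: algebra_simps)
    qed
  qed
qed



definition ddist :: "(int \<Rightarrow> int) \<Rightarrow> int \<Rightarrow> nat" where
  "ddist \<Psi> k = (LEAST n. k - int n \<in> range \<Psi>)"

lemma psi_ge:
  assumes "strict_mono (\<Psi> :: int \<Rightarrow> int)"
  shows "\<Psi> i + int n \<le> \<Psi> (i + int n)"
proof (induction n)
  case 0 then show ?case by simp
next
  case (Suc n)
  have "\<Psi> (i + int n) < \<Psi> (i + int n + 1)" using assms by (simp add: strict_mono_def)
  moreover have e: "i + int (Suc n) = i + int n + 1" by simp
  ultimately show ?case using Suc unfolding e by linarith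
qed

lemma bracket:
  assumes sm: "strict_mono (\<Psi> :: int \<Rightarrow> int)"
  shows "\<exists>j. \<Psi> j \<le> k \<and> k < \<Psi> (j + 1)"
proof -
  define j0 where "j0 = min 0 (k - \<Psi> 0)"
  have "\<Psi> j0 + int (nat (- j0)) \<le> \<Psi> (j0 + int (nat (- j0)))" by (rule psi_ge[OF sm])
  then have "\<Psi> j0 - j0 \<le> \<Psi> 0" unfolding j0_def by simp
  then have j0k: "\<Psi> j0 \<le> k" unfolding j0_def by simp
  define S where "S = {n::nat. \<Psi> (j0 + int n) \<le> k}"
  have "S \<subseteq> {..nat (k - \<Psi> j0)}"
  proof
    fix n assume "n \<in> S"
    then have "\<Psi> (j0 + int n) \<le> k" unfolding S_def by simp
    moreover have "\<Psi> j0 + int n \<le> \<Psi> (j0 + int n)" by (rule psi_ge[OF sm])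
    ultimately show "n \<in> {..nat (k - \<Psi> j0)}" by simp
  qed
  then have fin: "finite S" by (rule finite_subset) simp
  have "0 \<in> S" unfolding S_def using j0k by simp
  define m where "m = Max S"
  have mS: "m \<in> S" unfolding m_def using fin \<open>0 \<in> S\<close> by (intro Max_in) auto
  have "Suc m \<notin> S" using Max_ge[OF fin, of "Suc m"] unfolding m_def by auto
  then have "\<not> \<Psi> (j0 + int (Suc m)) \<le> k" unfolding S_def by simp
  moreover have "j0 + int (Suc m) = j0 + int m + 1" by simp
  ultimately have "k < \<Psi> (j0 + int m + 1)" by (metis not_le)
  moreover have "\<Psi> (j0 + int m) \<le> k" using mS unfolding S_def by simp
  ultimately show ?thesis by blast
qed

lemma ddist_ex:
  assumes sm: "strict_mono (\<Psi> :: int \<Rightarrow> int)" and jl: "\<And>k. jumps \<Psi> k \<le> int L"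
  shows "\<exists>n \<le> L. k - int n \<in> range \<Psi>"
proof -
  obtain j where j: "\<Psi> j \<le> k" "k < \<Psi> (j + 1)" using bracket[OF sm] by blast
  define n where "n = nat (k - \<Psi> j)"
  have "k - int n = \<Psi> j" unfolding n_def using j by simp
  moreover have "int n \<le> int L" unfolding n_def using j jl[of j] unfolding jumps_def by simp
  ultimately show ?thesis by (intro exI[of _ n]) auto
qed

lemma ddist_props:
  assumes sm: "strict_mono (\<Psi> :: int \<Rightarrow> int)" and jl: "\<And>k. jumps \<Psi> k \<le> int L"
  shows "k - int (ddist \<Psi> k) \<in> range \<Psi>" "ddist \<Psi> k \<le> L"
    and "ddist \<Psi> k = 0 \<longleftrightarrow> k \<in> range \<Psi>"
    and "ddist \<Psi> k \<noteq> 0 \<Longrightarrow> ddist \<Psi> (k - 1) = ddist \<Psi> k - 1"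
    and "ddist \<Psi> (k + 1) = 0 \<or> ddist \<Psi> (k + 1) = ddist \<Psi> k + 1"
proof -
  have ex: "\<exists>n. k' - int n \<in> range \<Psi>" for k' using ddist_ex[OF sm jl, of k'] by blast
  show mem: "k - int (ddist \<Psi> k) \<in> range \<Psi>" for k
    unfolding ddist_def by (rule LeastI_ex[OF ex])
  show "ddist \<Psi> k \<le> L"
  proof -
    obtain n where "n \<le> L" "k - int n \<in> range \<Psi>" using ddist_ex[OF sm jl, of k] by blast
    then show ?thesis unfolding ddist_def by (meson Least_le order_trans)
  qed
  show z: "ddist \<Psi> k = 0 \<longleftrightarrow> k \<in> range \<Psi>" for k
  proof
    assume "ddist \<Psi> k = 0" then show "k \<in> range \<Psi>" using mem[of k] by simp
  next
    assume "k \<in> range \<Psi>" then have "k - int 0 \<in> range \<Psi>" by simp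
    then show "ddist \<Psi> k = 0" unfolding ddist_def by (metis Least_le le_zero_eq)
  qed
  have notin: "k' - int m \<notin> range \<Psi>" if "m < ddist \<Psi> k'" for k' m
    using that unfolding ddist_def by (rule not_less_Least)
  show "ddist \<Psi> (k - 1) = ddist \<Psi> k - 1" if nz: "ddist \<Psi> k \<noteq> 0"
  proof -
    have "ddist \<Psi> (k - 1) = (LEAST n. (k - 1) - int n \<in> range \<Psi>)" unfolding ddist_def ..
    also have "\<dots> = ddist \<Psi> k - 1"
    proof (rule Least_equality)
      show "k - 1 - int (ddist \<Psi> k - 1) \<in> range \<Psi>" using mem[of k] nz by (simp add: of_nat_diff)
      fix y assume y: "k - 1 - int y \<in> range \<Psi>"
      show "ddist \<Psi> k - 1 \<le> y"
      proof (rule ccontr)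
        assume "\<not> ddist \<Psi> k - 1 \<le> y"
        then have "Suc y < ddist \<Psi> k" by simp
        then have "k - int (Suc y) \<notin> range \<Psi>" by (rule notin)
        then show False using y by (simp add: algebra_simps)
      qed
    qed
    finally show ?thesis .
  qed
  show "ddist \<Psi> (k + 1) = 0 \<or> ddist \<Psi> (k + 1) = ddist \<Psi> k + 1"
  proof (cases "k + 1 \<in> range \<Psi>")
    case True then show ?thesis using z by simp
  next
    case False
    have "ddist \<Psi> (k + 1) = (LEAST n. (k + 1) - int n \<in> range \<Psi>)" unfolding ddist_def ..
    also have "\<dots> = ddist \<Psi> k + 1"
    proof (rule Least_equality)
      show "k + 1 - int (ddist \<Psi> k + 1) \<in> range \<Psi>" using mem[of k] by simp
      fix y assume y: "k + 1 - int y \<in> range \<Psi>"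
      show "ddist \<Psi> k + 1 \<le> y"
      proof (cases y)
        case 0 then show ?thesis using y False by simp
      next
        case (Suc y')
        then have "k - int y' \<in> range \<Psi>" using y by (simp add: algebra_simps)
        then have "\<not> y' < ddist \<Psi> k" using notin by blast
        then show ?thesis using Suc by simp
      qed
    qed
    finally show ?thesis by simp
  qed
qed



definition regsol :: "real \<Rightarrow> real \<Rightarrow> (int \<Rightarrow> real) \<Rightarrow> (real \<Rightarrow> int \<Rightarrow> real) \<Rightarrow> bool" where
  "regsol \<beta> \<delta> w U \<longleftrightarrow> (\<forall>k. U 0 k = w k) \<and> (\<forall>k t. 0 \<le> t \<longrightarrow> \<delta> \<le> U t k \<and> U t k \<le> 1)
     \<and> (\<forall>k. continuous_on {0..} (\<lambda>t. U t k))
     \<and> (\<forall>k t. 0 < t \<longrightarrow> ((\<lambda>s. U s k) has_real_derivative dlap (\<lambda>j. Gb \<beta> (U t j)) k) (at t))"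

definition T0 :: "real \<Rightarrow> nat \<Rightarrow> real" where "T0 \<beta> L = S0 \<beta> L / 2"
definition cst :: "real \<Rightarrow> nat \<Rightarrow> real" where "cst \<beta> L = amin \<beta> L * T0 \<beta> L powr gam \<beta>"
definition dstar :: "real \<Rightarrow> nat \<Rightarrow> real" where "dstar \<beta> L = min (1/2) (T0 \<beta> L powr gam \<beta>)"

lemma T0_props: "\<beta> < 1 \<Longrightarrow> 0 < T0 \<beta> L \<and> T0 \<beta> L \<le> 1/2 \<and> 2 * T0 \<beta> L = S0 \<beta> L"
  unfolding T0_def using S0_props[of \<beta> L] by auto

lemma cst_pos: "\<beta> < 0 \<or> (0 < \<beta> \<and> \<beta> < 1) \<Longrightarrow> 0 < cst \<beta> L"
  unfolding cst_def using amin_pos[of \<beta> L] T0_props[of \<beta> L] by auto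

lemma dstar_pos: "\<beta> < 0 \<or> (0 < \<beta> \<and> \<beta> < 1) \<Longrightarrow> 0 < dstar \<beta> L"
  unfolding dstar_def using T0_props[of \<beta> L] by auto

lemma lower_reg:
  fixes \<Psi> :: "int \<Rightarrow> int" and u0 :: "int \<Rightarrow> real"
  assumes b: "\<beta> < 0 \<or> (0 < \<beta> \<and> \<beta> < 1)"
    and sm: "strict_mono \<Psi>" and jl: "\<And>k. jumps \<Psi> k \<le> int L"
    and u0b: "\<And>k. 1/2 \<le> u0 k \<and> u0 k \<le> 1"
    and \<delta>: "0 < \<delta>" "\<delta> \<le> dstar \<beta> L"
    and U: "regsol \<beta> \<delta> (\<lambda>k. max (creation \<Psi> u0 k) \<delta>) U"
    and t: "0 \<le> t"
  shows "cst \<beta> L * min 1 (t powr gam \<beta>) \<le> U t k"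
proof -
  have b0: "\<beta> \<noteq> 0" "\<beta> < 1" using b by auto
  have g: "0 < gam \<beta>" using gam_pos[OF b0(2)] .
  define T where "T = T0 \<beta> L"
  have T: "0 < T" "T \<le> 1/2" "2 * T = S0 \<beta> L" using T0_props[OF b0(2), of L] unfolding T_def by auto
  define dd where "dd = ddist \<Psi>"
  note ddp = ddist_props[OF sm jl, folded dd_def]
  have ddL: "\<And>k. dd k \<le> L" using ddp(2) by blast
  have ddl: "\<And>k. dd k \<noteq> 0 \<Longrightarrow> dd (k - 1) = dd k - 1" using ddp(4) by blast
  have ddr: "\<And>k. dd (k + 1) = 0 \<or> dd (k + 1) = dd k + 1" using ddp(5) by blast
  have U0: "\<And>k. U 0 k = max (creation \<Psi> u0 k) \<delta>" and Ub: "\<And>k t. 0 \<le> t \<Longrightarrow> \<delta> \<le> U t k \<and> U t k \<le> 1"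
    and Uc: "\<And>k. continuous_on {0..} (\<lambda>t. U t k)"
    and Ud: "\<And>k t. 0 < t \<Longrightarrow> ((\<lambda>s. U s k) has_real_derivative dlap (\<lambda>j. Gb \<beta> (U t j)) k) (at t)"
    using U unfolding regsol_def by auto
  define \<tau> where "\<tau> = \<delta> powr (1 / gam \<beta>)"
  have \<tau>0: "0 < \<tau>" unfolding \<tau>_def using \<delta> by simp
  have \<tau>g: "\<tau> powr gam \<beta> = \<delta>" unfolding \<tau>_def using \<delta> g by (simp add: powr_powr)
  have \<tau>T: "\<tau> \<le> T"
  proof -
    have "\<delta> \<le> T powr gam \<beta>" using \<delta> unfolding dstar_def T_def by simp
    then have "\<tau> \<le> (T powr gam \<beta>) powr (1 / gam \<beta>)" unfolding \<tau>_def using \<delta> g by (intro powr_mono2) auto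
    also have "\<dots> = T" using T g by (simp add: powr_powr)
    finally show ?thesis .
  qed
  have am: "0 < amin \<beta> L" "amin \<beta> L \<le> 1/4" using amin_pos[OF b] amin_le[OF b] by auto
  define v where "v = (\<lambda>t k. VV \<beta> L dd (t + \<tau>) k)"
  have stage1: "v t k \<le> U t k" if t: "0 \<le> t" "t \<le> T" for t k
  proof (rule comparison[where \<eta> = "amin \<beta> L * \<delta>", OF b0 _ _ _ _ _ _ _ _ t])
    show "0 < amin \<beta> L * \<delta>" using am \<delta> by simp
    show "continuous_on {0..T} (\<lambda>t. U t k)" for k using Uc by (rule continuous_on_subset) auto
    show "continuous_on {0..T} (\<lambda>t. v t k)" for k
    proof -
      have "continuous_on {0..T} (\<lambda>t. t + \<tau>)" by (intro continuous_intros)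
      moreover have "(\<lambda>t. t + \<tau>) ` {0..T} \<subseteq> {0<..}" using \<tau>0 by auto
      ultimately show ?thesis unfolding v_def by (rule continuous_on_compose2[OF VV_cont])
    qed
    show "\<exists>d. ((\<lambda>s. U s k) has_real_derivative d) (at t) \<and> dlap (\<lambda>j. Gb \<beta> (U t j)) k \<le> d"
      if "0 < t" "t < T" for k t using Ud[OF that(1)] by blast
    show "\<exists>d. ((\<lambda>s. v s k) has_real_derivative d) (at t) \<and> d \<le> dlap (\<lambda>j. Gb \<beta> (v t j)) k"
      if tt: "0 < t" "t < T" for k t
    proof -
      have s: "0 < t + \<tau>" "t + \<tau> \<le> S0 \<beta> L" using tt \<tau>0 \<tau>T T by auto
      have "((\<lambda>s. VV \<beta> L dd (s + \<tau>) k) has_real_derivative VVd \<beta> L dd (t + \<tau>) k) (at t)"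
        using VV_deriv[OF s(1)] by (simp add: DERIV_shift)
      moreover have "VVd \<beta> L dd (t + \<tau>) k \<le> dlap (\<lambda>j. Gb \<beta> (VV \<beta> L dd (t + \<tau>) j)) k"
        by (rule VV_sub[OF b ddL ddl ddr s])
      ultimately show ?thesis unfolding v_def by blast
    qed
    show "amin \<beta> L * \<delta> \<le> U t k \<and> U t k \<le> 1" if "0 \<le> t" "t \<le> T" for k t
    proof -
      have "amin \<beta> L * \<delta> \<le> 1 * \<delta>" using am \<delta> by (intro mult_right_mono) auto
      then show ?thesis using Ub[OF that(1), of k] by simp
    qed
    show "amin \<beta> L * \<delta> \<le> v t k \<and> v t k \<le> 1" if tt: "0 \<le> t" "t \<le> T" for k t
    proof -
      have s: "0 < t + \<tau>" "t + \<tau> \<le> S0 \<beta> L" using tt \<tau>0 \<tau>T T by auto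
      note vb = VV_bounds[where \<beta>=\<beta> and dd=dd and L=L and s="t + \<tau>" and k=k, OF b ddL s]
      have "\<tau> powr gam \<beta> \<le> (t + \<tau>) powr gam \<beta>" using tt \<tau>0 g by (intro powr_mono2) auto
      then have "amin \<beta> L * \<delta> \<le> amin \<beta> L * (t + \<tau>) powr gam \<beta>" using am \<tau>g by (intro mult_left_mono) auto
      then show ?thesis using vb(3,5) unfolding v_def by simp
    qed
    show "v 0 k \<le> U 0 k" for k
    proof (cases "dd k = 0")
      case True
      then have "k \<in> range \<Psi>" using ddp(3) by blast
      then have "creation \<Psi> u0 k \<ge> 1/2" unfolding creation_def using u0b by simp
      moreover have "v 0 k \<le> 1/2" unfolding v_def using VV_bounds(5)[where \<beta>=\<beta> and dd=dd and L=L and s=\<tau> and k=k, OF b ddL] \<tau>0 \<tau>T T by simp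
      ultimately show ?thesis using U0[of k] by simp
    next
      case False
      have ab: "aa \<beta> L (dd k) \<le> 1/4" using aa_bounds(2)[OF b, of "dd k" L] False ddL[of k] by simp
      have "v 0 k = aa \<beta> L (dd k) * \<delta>" unfolding v_def VV_def using False \<tau>g by simp
      also have "\<dots> \<le> 1 * \<delta>" using ab \<delta> by (intro mult_right_mono) auto
      finally show ?thesis using U0[of k] by simp
    qed
  qed
  have low1: "amin \<beta> L * t powr gam \<beta> \<le> U t k" if t: "0 \<le> t" "t \<le> T" for t k
  proof -
    have s: "0 < t + \<tau>" "t + \<tau> \<le> S0 \<beta> L" using t \<tau>0 \<tau>T T by auto
    have "t powr gam \<beta> \<le> (t + \<tau>) powr gam \<beta>" using t \<tau>0 g by (intro powr_mono2) auto
    then have "amin \<beta> L * t powr gam \<beta> \<le> amin \<beta> L * (t + \<tau>) powr gam \<beta>" using am by (intro mult_left_mono) auto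
    also have "\<dots> \<le> v t k" unfolding v_def by (rule VV_bounds(3)[where \<beta>=\<beta> and dd=dd and L=L and s="t + \<tau>" and k=k, OF b ddL s])
    also have "\<dots> \<le> U t k" by (rule stage1[OF t])
    finally show ?thesis .
  qed
  define m where "m = amin \<beta> L * T powr gam \<beta>"
  have m0: "0 < m" unfolding m_def using am T by simp
  have Tg1: "T powr gam \<beta> \<le> 1" using T g by (intro powr_le1) auto
  have m1: "m \<le> 1/4" unfolding m_def using am Tg1 by (smt (verit) mult_left_le)
  have low2: "m \<le> U t k" if t: "T \<le> t" for t k
  proof -
    define W where "W = (\<lambda>s k. U (s + T) k)"
    have "(\<lambda>s k. m) (t - T) k \<le> W (t - T) k"
    proof (rule comparison[where \<eta> = "min \<delta> m" and T = "t - T" and u = W and v = "\<lambda>s k. m", OF b0])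
      show "0 < min \<delta> m" using \<delta> m0 by simp
      show "continuous_on {0..t - T} (\<lambda>s. W s k)" for k
      proof -
        have "continuous_on {0..t - T} (\<lambda>s. s + T)" by (intro continuous_intros)
        moreover have "(\<lambda>s. s + T) ` {0..t - T} \<subseteq> {0..}" using T by auto
        ultimately show ?thesis unfolding W_def by (rule continuous_on_compose2[OF Uc])
      qed
      show "continuous_on {0..t - T} (\<lambda>s. (\<lambda>s k. m) s k)" for k by simp
      show "\<exists>d. ((\<lambda>s. W s k) has_real_derivative d) (at s) \<and> dlap (\<lambda>j. Gb \<beta> (W s j)) k \<le> d"
        if "0 < s" "s < t - T" for k s
      proof -
        have "((\<lambda>s. U s k) has_real_derivative dlap (\<lambda>j. Gb \<beta> (U (s + T) j)) k) (at (s + T))"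
          using Ud[of "s + T" k] that T by simp
        then have "((\<lambda>s. W s k) has_real_derivative dlap (\<lambda>j. Gb \<beta> (W s j)) k) (at s)"
          unfolding W_def by (simp add: DERIV_shift)
        then show ?thesis by blast
      qed
      show "\<exists>d. ((\<lambda>s. (\<lambda>s k. m) s k) has_real_derivative d) (at s) \<and> d \<le> dlap (\<lambda>j. Gb \<beta> ((\<lambda>s k. m) s j)) k"
        if "0 < s" "s < t - T" for k s
        by (intro exI[of _ 0]) (auto simp: dlap_def)
      show "min \<delta> m \<le> W s k \<and> W s k \<le> 1" if "0 \<le> s" "s \<le> t - T" for k s
        using Ub[of "s + T" k] that T unfolding W_def by auto
      show "min \<delta> m \<le> (\<lambda>s k. m) s k \<and> (\<lambda>s k. m) s k \<le> 1" for k s using m1 by simp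
      show "(\<lambda>s k. m) 0 k \<le> W 0 k" for k
        using low1[of T k] T unfolding W_def m_def by simp
    qed (use t in auto)
    then show ?thesis unfolding W_def using t by simp
  qed
  have cT: "cst \<beta> L = m" unfolding cst_def m_def T_def ..
  show ?thesis
  proof (cases "t \<le> T")
    case True
    have "cst \<beta> L * min 1 (t powr gam \<beta>) \<le> m * t powr gam \<beta>"
      unfolding cT using m0 by (intro mult_left_mono) auto
    also have "\<dots> \<le> amin \<beta> L * t powr gam \<beta>"
      unfolding m_def using am Tg1 by (intro mult_right_mono) (auto simp: mult_left_le)
    also have "\<dots> \<le> U t k" using low1[OF \<open>0 \<le> t\<close> True] .
    finally show ?thesis .
  next
    case False
    have "cst \<beta> L * min 1 (t powr gam \<beta>) \<le> m * 1"
      unfolding cT using m0 by (intro mult_left_mono) auto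
    also have "\<dots> \<le> U t k" using low2[of t k] False by simp
    finally show ?thesis .
  qed
qed



definition RR :: "real \<Rightarrow> nat \<Rightarrow> real \<Rightarrow> real" where
  "RR \<beta> L t = 2 + 2 * cst \<beta> L powr \<beta> * (1 + t powr (gam \<beta> - 1))"
definition PP :: "real \<Rightarrow> nat \<Rightarrow> real \<Rightarrow> real" where
  "PP \<beta> L t = 2 * t + 2 * cst \<beta> L powr \<beta> * (t + t powr gam \<beta> / gam \<beta>)"
definition ell :: "real \<Rightarrow> nat \<Rightarrow> real \<Rightarrow> real" where
  "ell \<beta> L t = cst \<beta> L * min 1 (t powr gam \<beta>)"

lemma ell_pos: "\<beta> < 0 \<or> (0 < \<beta> \<and> \<beta> < 1) \<Longrightarrow> 0 < t \<Longrightarrow> 0 < ell \<beta> L t"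
  unfolding ell_def using cst_pos[of \<beta> L] by simp

lemma ell_nonneg: "\<beta> < 0 \<or> (0 < \<beta> \<and> \<beta> < 1) \<Longrightarrow> 0 \<le> ell \<beta> L t"
  unfolding ell_def using cst_pos[of \<beta> L] by simp

lemma ell_mono: "\<beta> < 0 \<or> (0 < \<beta> \<and> \<beta> < 1) \<Longrightarrow> 0 \<le> s \<Longrightarrow> s \<le> t \<Longrightarrow> ell \<beta> L s \<le> ell \<beta> L t"
proof -
  assume b: "\<beta> < 0 \<or> (0 < \<beta> \<and> \<beta> < 1)" and st: "0 \<le> s" "s \<le> t"
  have "s powr gam \<beta> \<le> t powr gam \<beta>" using st gam_pos[of \<beta>] b by (intro powr_mono2) auto
  then have "min 1 (s powr gam \<beta>) \<le> min 1 (t powr gam \<beta>)" by simp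
  then show ?thesis unfolding ell_def using cst_pos[OF b, of L] by (intro mult_left_mono) auto
qed

lemma RR_ge2: "2 \<le> RR \<beta> L t" unfolding RR_def by simp

lemma R_bound:
  assumes b: "\<beta> < 0 \<or> (0 < \<beta> \<and> \<beta> < 1)" and t: "0 < t"
    and x: "\<And>j. ell \<beta> L t \<le> x j \<and> x j \<le> 1"
  shows "\<bar>dlap (\<lambda>j. Gb \<beta> (x j)) k\<bar> \<le> RR \<beta> L t"
proof -
  have l0: "0 < ell \<beta> L t" using ell_pos[OF b t] .
  have xp: "0 < x j" for j using x[of j] l0 by linarith
  show ?thesis
  proof (cases "0 < \<beta>")
    case True
    have "0 \<le> Gb \<beta> (x j) \<and> Gb \<beta> (x j) \<le> 1" for j
      unfolding Gb_posf[OF True] using x[of j] xp[of j] True by (auto intro: powr_le1)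
    then have "\<bar>dlap (\<lambda>j. Gb \<beta> (x j)) k\<bar> \<le> 2" unfolding dlap_def
      by (smt (verit))
    then show ?thesis using RR_ge2[of \<beta> L t] by linarith
  next
    case False
    then have bn: "\<beta> < 0" using b by auto
    define l where "l = ell \<beta> L t"
    have pb: "1 \<le> x j powr \<beta> \<and> x j powr \<beta> \<le> l powr \<beta>" for j
    proof
      show "1 \<le> x j powr \<beta>" using x[of j] xp[of j] bn
        by (metis ge_one_powr_ge_zero inverse_powr le_imp_inverse_le less_eq_real_def minus_minus neg_0_less_iff_less one_le_inverse_iff powr_minus) 
      show "x j powr \<beta> \<le> l powr \<beta>" unfolding l_def using x[of j] l0 bn by (intro powr_mono2') auto
    qed
    have d: "\<bar>dlap (\<lambda>j. Gb \<beta> (x j)) k\<bar> \<le> 2 * l powr \<beta>"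
      unfolding dlap_def Gb_negf[OF bn] using pb[of "k-1"] pb[of k] pb[of "k+1"] by (simp add: abs_le_iff)
    have c0: "0 < cst \<beta> L" using cst_pos[OF b] .
    have lp: "l powr \<beta> = cst \<beta> L powr \<beta> * (min 1 (t powr gam \<beta>)) powr \<beta>"
      unfolding l_def ell_def using c0 t by (simp add: powr_mult)
    have mb: "(min 1 (t powr gam \<beta>)) powr \<beta> \<le> 1 + t powr (gam \<beta> - 1)"
    proof (cases "t powr gam \<beta> \<le> 1")
      case True
      have "(t powr gam \<beta>) powr \<beta> = t powr (gam \<beta> - 1)" using gam_m1[of \<beta>] bn by (simp add: powr_powr)
      then show ?thesis using True by simp
    next
      case False
      then show ?thesis by simp
    qed
    have "2 * l powr \<beta> \<le> 2 * (cst \<beta> L powr \<beta> * (1 + t powr (gam \<beta> - 1)))"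
      unfolding lp using mb by (intro mult_left_mono) auto
    then show ?thesis using d unfolding RR_def by linarith
  qed
qed

lemma PP_deriv: "\<beta> < 1 \<Longrightarrow> 0 < t \<Longrightarrow> (PP \<beta> L has_real_derivative RR \<beta> L t) (at t)"
proof -
  assume b: "\<beta> < 1" and t: "0 < t"
  have g: "0 < gam \<beta>" using gam_pos[OF b] .
  have "((\<lambda>t. 2 * t + 2 * cst \<beta> L powr \<beta> * (t + t powr gam \<beta> / gam \<beta>)) has_real_derivative
      2 * 1 + 2 * cst \<beta> L powr \<beta> * (1 + gam \<beta> * t powr (gam \<beta> - 1) / gam \<beta>)) (at t)"
    using t by (auto intro!: derivative_eq_intros)
  moreover have "2 * 1 + 2 * cst \<beta> L powr \<beta> * (1 + gam \<beta> * t powr (gam \<beta> - 1) / gam \<beta>) = RR \<beta> L t"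
    unfolding RR_def using g by simp
  ultimately show ?thesis unfolding PP_def[abs_def] by simp
qed

lemma PP_cont: "\<beta> < 1 \<Longrightarrow> continuous_on {0..} (PP \<beta> L)"
proof -
  assume b: "\<beta> < 1"
  have g: "0 < gam \<beta>" using gam_pos[OF b] .
  have cp: "continuous_on {0..} (\<lambda>t::real. t powr gam \<beta>)"
  proof (rule continuous_on_powr')
    show "continuous_on {0..} (\<lambda>t::real. t)" by (rule continuous_on_id)
    show "continuous_on {0..} (\<lambda>t::real. gam \<beta>)" by (rule continuous_on_const)
    show "\<forall>x\<in>{0..}. 0 \<le> x \<and> (x = 0 \<longrightarrow> 0 < gam \<beta>)" using g by auto
  qed
  have cq: "continuous_on {0..} (\<lambda>t::real. t powr gam \<beta> / gam \<beta>)"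
    using cp by (rule continuous_on_divide) (use g in auto)
  show ?thesis unfolding PP_def[abs_def]
    by (intro continuous_on_add continuous_on_mult continuous_on_const continuous_on_id cq)
qed

lemma PP_bound:
  assumes b: "\<beta> < 0 \<or> (0 < \<beta> \<and> \<beta> < 1)"
    and Uc: "continuous_on {0..} (\<lambda>t. U t k)"
    and Ud: "\<And>t. 0 < t \<Longrightarrow> ((\<lambda>s. U s k) has_real_derivative dlap (\<lambda>j. Gb \<beta> (U t j)) k) (at t)"
    and Ul: "\<And>t j. 0 < t \<Longrightarrow> ell \<beta> L t \<le> U t j \<and> U t j \<le> 1"
    and st: "0 \<le> s" "s \<le> t"
  shows "\<bar>U t k - U s k\<bar> \<le> PP \<beta> L t - PP \<beta> L s"
proof -
  have b1: "\<beta> < 1" using b by auto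
  have c1: "continuous_on {s..t} (\<lambda>t. U t k)" using Uc by (rule continuous_on_subset) (use st in auto)
  have c2: "continuous_on {s..t} (PP \<beta> L)" using PP_cont[OF b1] by (rule continuous_on_subset) (use st in auto)
  have c3: "continuous_on {s..t} (\<lambda>x. - PP \<beta> L x)" using c2 by (intro continuous_intros)
  have bd: "\<bar>dlap (\<lambda>j. Gb \<beta> (U x j)) k\<bar> \<le> RR \<beta> L x" if "s < x" for x
    using R_bound[OF b, of x] Ul that st by auto
  have "U t k - U s k \<le> PP \<beta> L t - PP \<beta> L s"
  proof (rule deriv_le_imp_diff_le[OF st(2) c1 c2])
    fix x assume x: "s < x" "x < t"
    show "\<exists>df dg. ((\<lambda>t. U t k) has_real_derivative df) (at x) \<and> (PP \<beta> L has_real_derivative dg) (at x) \<and> df \<le> dg"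
      using Ud[of x] PP_deriv[OF b1, where L=L and t=x] bd[of x] x st
      by (intro exI[of _ "dlap (\<lambda>j. Gb \<beta> (U x j)) k"] exI[of _ "RR \<beta> L x"] conjI) (auto simp: abs_le_iff)
  qed
  moreover have "(\<lambda>x. - PP \<beta> L x) t - (\<lambda>x. - PP \<beta> L x) s \<le> U t k - U s k"
  proof (rule deriv_le_imp_diff_le[OF st(2) c3 c1])
    fix x assume x: "s < x" "x < t"
    have "((\<lambda>x. - PP \<beta> L x) has_real_derivative - RR \<beta> L x) (at x)"
      using PP_deriv[OF b1, where L=L and t=x] x st by (auto intro!: derivative_eq_intros)
    then show "\<exists>df dg. ((\<lambda>x. - PP \<beta> L x) has_real_derivative df) (at x) \<and> ((\<lambda>t. U t k) has_real_derivative dg) (at x) \<and> df \<le> dg"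
      using Ud[of x] bd[of x] x st
      by (intro exI[of _ "- RR \<beta> L x"] exI[of _ "dlap (\<lambda>j. Gb \<beta> (U x j)) k"] conjI) (auto simp: abs_le_iff)
  qed
  ultimately show ?thesis by (simp add: abs_le_iff)
qed

lemma PP_lip:
  assumes b1: "\<beta> < 1" and t: "0 < t" and x: "\<bar>x - t\<bar> < t / 2"
  shows "\<bar>PP \<beta> L x - PP \<beta> L t\<bar> \<le> (RR \<beta> L (t/2) + RR \<beta> L (3 * t / 2)) * \<bar>x - t\<bar>"
proof -
  define M where "M = RR \<beta> L (t/2) + RR \<beta> L (3 * t / 2)"
  have Rb: "RR \<beta> L y \<le> M" if y: "t/2 \<le> y" "y \<le> 3 * t / 2" for y
  proof -
    have yp: "0 < y" using y t by simp
    have "y powr (gam \<beta> - 1) \<le> (t/2) powr (gam \<beta> - 1) + (3 * t / 2) powr (gam \<beta> - 1)"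
    proof (cases "0 \<le> gam \<beta> - 1")
      case True
      then have "y powr (gam \<beta> - 1) \<le> (3 * t / 2) powr (gam \<beta> - 1)" using y yp by (intro powr_mono2) auto
      then show ?thesis by (smt (verit) powr_ge_zero)
    next
      case False
      then have "y powr (gam \<beta> - 1) \<le> (t/2) powr (gam \<beta> - 1)" using y t by (intro powr_mono2') auto
      then show ?thesis by (smt (verit) powr_ge_zero)
    qed
    then have "2 * cst \<beta> L powr \<beta> * (1 + y powr (gam \<beta> - 1))
       \<le> 2 * cst \<beta> L powr \<beta> * (1 + ((t/2) powr (gam \<beta> - 1) + (3 * t / 2) powr (gam \<beta> - 1)))"
      by (intro mult_left_mono) auto
    moreover have "0 \<le> cst \<beta> L powr \<beta>" by simp
    ultimately show ?thesis unfolding M_def RR_def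
      by (simp add: algebra_simps) (use powr_ge_zero[of "cst \<beta> L" \<beta>] in linarith)
  qed
  define a where "a = min x t"
  define c where "c = max x t"
  have "x - t < t/2 \<and> - (x - t) < t/2" using x by (simp only: abs_less_iff)
  then have xx: "t/2 < x" "x < 3 * t / 2" by linarith+
  have ac: "a \<le> c" "t/2 < a" "c < 3 * t / 2" unfolding a_def c_def using xx t by auto
  have "\<bar>PP \<beta> L c - PP \<beta> L a\<bar> \<le> M * (c - a)"
  proof (rule deriv_abs_bound[OF ac(1)])
    have "(PP \<beta> L has_real_derivative RR \<beta> L y) (at y within {a..c})" if "y \<in> {a..c}" for y
    proof -
      have "0 < y" using that ac t by simp
      from PP_deriv[OF b1 this, where L=L] show ?thesis by (rule has_field_derivative_at_within)
    qed
    then show "continuous_on {a..c} (PP \<beta> L)" by (rule DERIV_continuous_on)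
    fix y assume y: "a < y" "y < c"
    have y0: "0 < y" using y ac t by simp
    have "RR \<beta> L y \<le> M" using Rb[of y] y ac by simp
    then have "\<bar>RR \<beta> L y\<bar> \<le> M" using RR_ge2[of \<beta> L y] by simp
    then show "\<exists>d. (PP \<beta> L has_real_derivative d) (at y) \<and> \<bar>d\<bar> \<le> M"
      using PP_deriv[OF b1 y0, where L=L] by blast
  qed
  moreover have "c - a = \<bar>x - t\<bar>" unfolding a_def c_def by auto
  moreover have "\<bar>PP \<beta> L c - PP \<beta> L a\<bar> = \<bar>PP \<beta> L x - PP \<beta> L t\<bar>"
    unfolding a_def c_def by (cases "x \<le> t") (auto simp: abs_minus_commute)
  ultimately show ?thesis unfolding M_def by simp
qed



lemma cont_dom:
  fixes f g :: "real \<Rightarrow> real"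
  assumes "\<And>s t. s \<in> S \<Longrightarrow> t \<in> S \<Longrightarrow> \<bar>f s - f t\<bar> \<le> \<bar>g s - g t\<bar>" "continuous_on S g"
  shows "continuous_on S f"
  unfolding continuous_on_iff
proof (intro ballI allI impI)
  fix x e assume x: "x \<in> S" and e: "(0::real) < e"
  obtain d where d: "d > 0" "\<And>x'. x' \<in> S \<Longrightarrow> dist x' x < d \<Longrightarrow> dist (g x') (g x) < e"
    using assms(2) x e unfolding continuous_on_iff by blast
  show "\<exists>d>0. \<forall>x'\<in>S. dist x' x < d \<longrightarrow> dist (f x') (f x) < e"
  proof (intro exI[of _ d] conjI ballI impI d(1))
    fix x' assume "x' \<in> S" "dist x' x < d"
    then have "dist (g x') (g x) < e" using d by blast
    moreover have "\<bar>f x' - f x\<bar> \<le> \<bar>g x' - g x\<bar>" using assms(1) \<open>x' \<in> S\<close> x by blast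
    ultimately show "dist (f x') (f x) < e" unfolding dist_real_def by linarith
  qed
qed

lemma main_constr:
  fixes \<Psi> :: "int \<Rightarrow> int" and u0 :: "int \<Rightarrow> real"
  assumes b: "\<beta> < 0 \<or> (0 < \<beta> \<and> \<beta> < 1)"
    and u0b: "\<And>k. 1/2 \<le> u0 k \<and> u0 k \<le> 1"
    and sm: "strict_mono \<Psi>" and jl: "\<And>k. jumps \<Psi> k \<le> int L"
  shows "\<exists>u. classical_solution \<beta> (creation \<Psi> u0) u \<and> (\<forall>t\<ge>0. \<forall>k. u t k \<le> 1) \<and>
           (\<forall>t\<ge>0. \<forall>k. cst \<beta> L * min 1 (t powr (1 / (1 - \<beta>))) \<le> u t k)"
proof -
  have b0: "\<beta> \<noteq> 0" "\<beta> < 1" using b by auto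
  define w where "w = creation \<Psi> u0"
  have wb: "0 \<le> w k \<and> w k \<le> 1" for k
    unfolding w_def creation_def using u0b[of "inv \<Psi> k"] by auto
  define \<delta> where "\<delta> = (\<lambda>n::nat. dstar \<beta> L / real (Suc n))"
  have ds: "0 < dstar \<beta> L" "dstar \<beta> L \<le> 1/2" using dstar_pos[OF b, of L] unfolding dstar_def by auto
  have \<delta>b: "0 < \<delta> n" "\<delta> n \<le> dstar \<beta> L" for n
    unfolding \<delta>_def using ds by (auto simp: divide_le_eq)
  have \<delta>m: "\<delta> (Suc n) \<le> \<delta> n" for n
    unfolding \<delta>_def using ds by (intro divide_left_mono) auto
  have \<delta>0: "\<delta> \<longlonglongrightarrow> 0" unfolding \<delta>_def by (rule LIMSEQ_Suc[OF lim_const_over_n])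
  have "\<exists>U. regsol \<beta> (\<delta> n) (\<lambda>k. max (w k) (\<delta> n)) U" for n
  proof -
    have "\<exists>U. (\<forall>k. U 0 k = max (w k) (\<delta> n)) \<and> (\<forall>k t. 0 \<le> t \<longrightarrow> \<delta> n \<le> U t k \<and> U t k \<le> 1)
           \<and> (\<forall>k. continuous_on {0..} (\<lambda>t. U t k))
           \<and> (\<forall>k t. 0 < t \<longrightarrow> ((\<lambda>s. U s k) has_real_derivative dlap (\<lambda>j. Gb \<beta> (U t j)) k) (at t))"
      using \<delta>b[of n] ds wb by (intro existence[OF b0]) auto
    then show ?thesis unfolding regsol_def .
  qed
  then obtain U where U: "\<And>n. regsol \<beta> (\<delta> n) (\<lambda>k. max (w k) (\<delta> n)) (U n)" by metis
  have U0: "\<And>n k. U n 0 k = max (w k) (\<delta> n)" and Ub: "\<And>n k t. 0 \<le> t \<Longrightarrow> \<delta> n \<le> U n t k \<and> U n t k \<le> 1"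
    and Uc: "\<And>n k. continuous_on {0..} (\<lambda>t. U n t k)"
    and Ud: "\<And>n k t. 0 < t \<Longrightarrow> ((\<lambda>s. U n s k) has_real_derivative dlap (\<lambda>j. Gb \<beta> (U n t j)) k) (at t)"
    using U unfolding regsol_def by auto
  have low: "ell \<beta> L t \<le> U n t k" if "0 \<le> t" for n t k
    unfolding ell_def using lower_reg[OF b sm jl u0b \<delta>b(1)[of n] \<delta>b(2)[of n] U[of n, unfolded w_def] that] .
  have Ul: "ell \<beta> L t \<le> U n t j \<and> U n t j \<le> 1" if "0 < t" for n t j
    using low[of t n j] Ub[of t n j] that by auto
  have mono: "U (Suc n) t k \<le> U n t k" if t: "0 \<le> t" for n t k
  proof (rule comparison[where \<eta> = "\<delta> (Suc n)" and T = t and u = "U n" and v = "U (Suc n)", OF b0 \<delta>b(1) _ _ _ _ _ _ _ t order_refl])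
    show "continuous_on {0..t} (\<lambda>t. U n t k)" for k using Uc by (rule continuous_on_subset) auto
    show "continuous_on {0..t} (\<lambda>t. U (Suc n) t k)" for k using Uc by (rule continuous_on_subset) auto
    show "\<exists>d. ((\<lambda>s. U n s k) has_real_derivative d) (at s) \<and> dlap (\<lambda>j. Gb \<beta> (U n s j)) k \<le> d"
      if "0 < s" "s < t" for k s using Ud[OF that(1)] by blast
    show "\<exists>d. ((\<lambda>s. U (Suc n) s k) has_real_derivative d) (at s) \<and> d \<le> dlap (\<lambda>j. Gb \<beta> (U (Suc n) s j)) k"
      if "0 < s" "s < t" for k s using Ud[OF that(1)] by blast
    show "\<delta> (Suc n) \<le> U n s k \<and> U n s k \<le> 1" if "0 \<le> s" "s \<le> t" for k s
      using Ub[OF that(1), of n k] \<delta>m[of n] by auto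
    show "\<delta> (Suc n) \<le> U (Suc n) s k \<and> U (Suc n) s k \<le> 1" if "0 \<le> s" "s \<le> t" for k s
      using Ub[OF that(1), of "Suc n" k] by auto
    show "U (Suc n) 0 k \<le> U n 0 k" for k unfolding U0 using \<delta>m[of n] by simp
  qed
  define u where "u = (\<lambda>t k. INF n. U n t k)"
  have conv: "(\<lambda>n. U n t k) \<longlonglongrightarrow> u t k" if "0 \<le> t" for t k
    unfolding u_def
  proof (rule LIMSEQ_decseq_INF)
    have "0 \<le> U n t k" for n using Ub[OF that, of n k] \<delta>b(1)[of n] by linarith
    then show "bdd_below (range (\<lambda>n. U n t k))" by (intro bdd_belowI[of _ 0]) auto
    show "decseq (\<lambda>n. U n t k)" using mono[OF that] by (intro decseq_SucI) auto
  qed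
  have ulow: "ell \<beta> L t \<le> u t k" if "0 \<le> t" for t k
    using conv[OF that, of k] low[OF that] by (intro LIMSEQ_le_const) auto
  have uup: "u t k \<le> 1" if "0 \<le> t" for t k
    using conv[OF that, of k] Ub[OF that] by (intro LIMSEQ_le_const2) auto
  have UPP: "\<bar>U n t k - U n s k\<bar> \<le> \<bar>PP \<beta> L t - PP \<beta> L s\<bar>" if "0 \<le> s" "0 \<le> t" for n s t k
  proof (cases "s \<le> t")
    case True
    then show ?thesis using PP_bound[where U="U n" and k=k and L=L and s=s and t=t, OF b Uc[of n k] Ud[of _ n k] Ul[of _ n] that(1) True] by simp
  next
    case False
    then have "t \<le> s" by simp
    then show ?thesis using PP_bound[where U="U n" and k=k and L=L and s=t and t=s, OF b Uc[of n k] Ud[of _ n k] Ul[of _ n] that(2)] by (simp add: abs_minus_commute)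
  qed
  have uPP: "\<bar>u t k - u s k\<bar> \<le> \<bar>PP \<beta> L t - PP \<beta> L s\<bar>" if "0 \<le> s" "0 \<le> t" for s t k
  proof -
    have "(\<lambda>n. \<bar>U n t k - U n s k\<bar>) \<longlonglongrightarrow> \<bar>u t k - u s k\<bar>"
      using conv[OF that(1)] conv[OF that(2)] by (intro tendsto_intros)
    then show ?thesis using UPP[OF that] by (intro LIMSEQ_le_const2) auto
  qed
  have ucont: "continuous_on {0..} (\<lambda>t. u t k)" for k
    by (rule cont_dom[OF _ PP_cont[OF b0(2)]]) (use uPP in auto)
  have u0: "u 0 k = w k" for k
  proof -
    have "(\<lambda>n. U n 0 k) \<longlonglongrightarrow> max (w k) 0" unfolding U0 by (intro tendsto_intros \<delta>0)
    then have "u 0 k = max (w k) 0" using conv[of 0 k] LIMSEQ_unique by auto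
    then show ?thesis using wb[of k] by simp
  qed
  have upos: "0 < u t k" if "0 < t" for t k using ulow[of t k] ell_pos[OF b that, of L] that by simp
  have uder: "((\<lambda>s. u s k) has_real_derivative dlap (\<lambda>j. Gb \<beta> (u t j)) k) (at t)" if t: "0 < t" for t k
  proof -
    define \<eta> where "\<eta> = ell \<beta> L (t/2)"
    have \<eta>0: "0 < \<eta>" unfolding \<eta>_def using ell_pos[OF b, of "t/2" L] t by simp
    define K where "K = \<bar>\<beta>\<bar> * \<eta> powr (\<beta> - 1)"
    define Mt where "Mt = RR \<beta> L (t/2) + RR \<beta> L (3 * t / 2)"
    have K0: "0 \<le> K" unfolding K_def by simp
    show ?thesis
    proof (rule deriv_limit[where f = "\<lambda>n s. U n s k" and D = "\<lambda>n x. dlap (\<lambda>j. Gb \<beta> (U n x j)) k" and M = "4 * K * Mt" and r = "t/2"])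
      show "0 < t/2" using t by simp
      fix n x assume x: "\<bar>x - t\<bar> < t/2"
      have "x - t < t/2 \<and> - (x - t) < t/2" using x by (simp only: abs_less_iff)
      then have xx: "t/2 < x" "x < 3 * t / 2" by linarith+
      then have x0: "0 < x" using t by simp
      show "((\<lambda>s. U n s k) has_real_derivative dlap (\<lambda>j. Gb \<beta> (U n x j)) k) (at x)" by (rule Ud[OF x0])
      have diff: "\<bar>U n x j - U n t j\<bar> \<le> Mt * \<bar>x - t\<bar>" for j
      proof -
        have "\<bar>U n x j - U n t j\<bar> \<le> \<bar>PP \<beta> L x - PP \<beta> L t\<bar>" using UPP[of t x n j] x0 t by simp
        also have "\<dots> \<le> Mt * \<bar>x - t\<bar>" unfolding Mt_def by (rule PP_lip[OF b0(2) t x])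
        finally show ?thesis .
      qed
      have geq: "\<eta> \<le> U n x j" "\<eta> \<le> U n t j" for j
      proof -
        have "\<eta> \<le> ell \<beta> L x" unfolding \<eta>_def using ell_mono[OF b, of "t/2" x L] xx t by simp
        then show "\<eta> \<le> U n x j" using low[of x n j] x0 by simp
        have "\<eta> \<le> ell \<beta> L t" unfolding \<eta>_def using ell_mono[OF b, of "t/2" t L] t by simp
        then show "\<eta> \<le> U n t j" using low[of t n j] t by simp
      qed
      have gl: "\<bar>Gb \<beta> (U n x j) - Gb \<beta> (U n t j)\<bar> \<le> K * (Mt * \<bar>x - t\<bar>)" for j
      proof -
        have "\<bar>Gb \<beta> (U n x j) - Gb \<beta> (U n t j)\<bar> \<le> K * \<bar>U n x j - U n t j\<bar>"
          unfolding K_def by (rule Gb_lip[OF b0 \<eta>0 geq(2) geq(1)])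
        also have "\<dots> \<le> K * (Mt * \<bar>x - t\<bar>)" using diff[of j] K0 by (rule mult_left_mono)
        finally show ?thesis .
      qed
      show "\<bar>dlap (\<lambda>j. Gb \<beta> (U n x j)) k - dlap (\<lambda>j. Gb \<beta> (U n t j)) k\<bar> \<le> 4 * K * Mt * \<bar>x - t\<bar>"
        unfolding dlap_def using gl[of "k-1"] gl[of k] gl[of "k+1"] by (simp add: abs_le_iff algebra_simps)
    next
      fix x assume x: "\<bar>x - t\<bar> < t/2"
      have "x - t < t/2 \<and> - (x - t) < t/2" using x by (simp only: abs_less_iff)
      then have "0 \<le> x" using t by linarith
      then show "(\<lambda>n. U n x k) \<longlonglongrightarrow> u x k" by (rule conv)
    next
      have gc: "isCont (Gb \<beta>) (u t j)" for j
        using Gb_cont[OF b0(1)] upos[OF t, of j] by (simp add: continuous_on_eq_continuous_at)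
      have "(\<lambda>n. Gb \<beta> (U n t j)) \<longlonglongrightarrow> Gb \<beta> (u t j)" for j
        using isCont_tendsto_compose[OF gc conv] t by auto
      then show "(\<lambda>n. dlap (\<lambda>j. Gb \<beta> (U n t j)) k) \<longlonglongrightarrow> dlap (\<lambda>j. Gb \<beta> (u t j)) k"
        unfolding dlap_def by (intro tendsto_intros)
    qed
  qed
  have upcont: "continuous_on {0<..} (\<lambda>t. dlap (\<lambda>j. Gb \<beta> (u t j)) k)" for k
  proof -
    have c: "continuous_on {0<..} (\<lambda>t. Gb \<beta> (u t j))" for j
      using ucont[of j] upos by (intro Gb_comp_cont[OF b0(1)]) (auto elim: continuous_on_subset)
    show ?thesis unfolding dlap_def by (intro continuous_intros c)
  qed
  have supcont: "\<exists>d>0. \<forall>s\<ge>0. \<bar>s - t\<bar> < d \<longrightarrow> (\<forall>k. \<bar>u s k - u t k\<bar> \<le> e)" if "0 \<le> t" "0 < e" for t e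
  proof -
    have "\<forall>x\<in>{0..}. \<forall>e>0. \<exists>d>0. \<forall>x'\<in>{0..}. dist x' x < d \<longrightarrow> dist (PP \<beta> L x') (PP \<beta> L x) < e"
      using PP_cont[OF b0(2), of L] unfolding continuous_on_iff .
    then have "\<exists>d>0. \<forall>x'\<in>{0..}. dist x' t < d \<longrightarrow> dist (PP \<beta> L x') (PP \<beta> L t) < e"
      using that by simp
    then obtain d where d: "d > 0" "\<And>x'. x' \<in> {0..} \<Longrightarrow> dist x' t < d \<Longrightarrow> dist (PP \<beta> L x') (PP \<beta> L t) < e"
      by blast
    show ?thesis
    proof (intro exI[of _ d] conjI allI impI d(1))
      fix s k assume s: "0 \<le> s" "\<bar>s - t\<bar> < d"
      then have "\<bar>PP \<beta> L s - PP \<beta> L t\<bar> < e" using d(2)[of s] by (simp add: dist_real_def)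
      moreover have "\<bar>u s k - u t k\<bar> \<le> \<bar>PP \<beta> L s - PP \<beta> L t\<bar>" using uPP[of t s k] s that by simp
      ultimately show "\<bar>u s k - u t k\<bar> \<le> e" by simp
    qed
  qed
  have gamE: "gam \<beta> = 1 / (1 - \<beta>)" unfolding gam_def ..
  have cls: "classical_solution \<beta> w u"
    unfolding classical_solution_def cont_linf_plus_def linf_plus_def
  proof (intro conjI allI impI)
    fix t :: real assume t: "0 \<le> t"
    have "\<bar>u t k\<bar> \<le> 1" for k
    proof -
      have "0 \<le> u t k" using ulow[OF t, of k] ell_nonneg[OF b, of L t] by linarith
      then show ?thesis using uup[OF t, of k] by simp
    qed
    then show "\<exists>B. \<forall>k. \<bar>u t k\<bar> \<le> B" by blast
    show "0 \<le> u t k" for k using ulow[OF t, of k] ell_nonneg[OF b, of L t] by simp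
  next
    fix t e :: real assume "0 \<le> t" "0 < e"
    then show "\<exists>d>0. \<forall>s\<ge>0. \<bar>s - t\<bar> < d \<longrightarrow> (\<forall>k. \<bar>u s k - u t k\<bar> \<le> e)" by (rule supcont)
  next
    show "u 0 = w" using u0 by auto
  next
    fix k :: int and t :: real assume "0 < t"
    then show "0 < u t k" by (rule upos)
  next
    fix k :: int
    show "\<exists>u'. continuous_on {0<..} u' \<and> (\<forall>t>0. ((\<lambda>s. u s k) has_real_derivative u' t) (at t))"
      using upcont[of k] uder by blast
  next
    fix k :: int and t :: real assume "0 < t"
    then show "((\<lambda>s. u s k) has_real_derivative dlap (\<lambda>j. Gb \<beta> (u t j)) k) (at t)" by (rule uder)
  qed
  show ?thesis
    using cls uup ulow unfolding w_def ell_def gamE by blast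
qed

theorem lemma4p3:
  fixes \<beta> :: real and L :: nat
  assumes "\<beta> < 0 \<or> (0 < \<beta> \<and> \<beta> < 1)"
  shows "\<exists>c>0. \<forall>(u0 :: int \<Rightarrow> real) (\<Psi> :: int \<Rightarrow> int).
           linf_plus u0 \<and> (\<forall>k. 1/2 \<le> u0 k \<and> u0 k \<le> 1) \<and>
           strict_mono \<Psi> \<and> (\<forall>k. jumps \<Psi> k \<le> int L) \<longrightarrow>
           (\<exists>u. classical_solution \<beta> (creation \<Psi> u0) u \<and>
                (\<forall>t\<ge>0. \<forall>k. u t k \<le> 1) \<and>
                (\<forall>t\<ge>0. \<forall>k. c * min 1 (t powr (1 / (1 - \<beta>))) \<le> u t k))"
proof (intro exI[of _ "cst \<beta> L"] conjI allI impI)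
  show "0 < cst \<beta> L" using cst_pos[OF assms] .
  fix u0 :: "int \<Rightarrow> real" and \<Psi> :: "int \<Rightarrow> int"
  assume h: "linf_plus u0 \<and> (\<forall>k. 1/2 \<le> u0 k \<and> u0 k \<le> 1) \<and> strict_mono \<Psi> \<and> (\<forall>k. jumps \<Psi> k \<le> int L)"
  show "\<exists>u. classical_solution \<beta> (creation \<Psi> u0) u \<and> (\<forall>t\<ge>0. \<forall>k. u t k \<le> 1) \<and>
           (\<forall>t\<ge>0. \<forall>k. cst \<beta> L * min 1 (t powr (1 / (1 - \<beta>))) \<le> u t k)"
    using h by (intro main_constr[OF assms]) auto
qed


end
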